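(* Let $(V,\kappa)$ be a real pre-Hilbert space and $D:V\to V$ a $\kappa$-skew-symmetric operator which integrates to a continuous $\kappa$-orthogonal one-parameter group $\gamma$ on $V$. Assume that $D(V)$ is dense in the completion $V_\kappa$. Then there exists a $\kappa$-orthogonal complex structure $I$ on $\mathcal D^\infty(\overline D)\subseteq V_\kappa$ which commutes with $\gamma(\mathbb R)$ and is $\omega_D$-negative, i.e. $(v,w)\mapsto\omega_D(-Iv,w)$ is a positive definite symmetric bilinear form on $\mathcal D^\infty(\overline D)$, where $\omega_D(v,w):=\kappa(\overline Dv,w)$.
   Context: $\overline D$ is the closure of $D$ in $V_\kappa$ (equivalently, the infinitesimal generator of the extension of $\gamma$ to a strongly continuous orthogonal one-parameter group on $V_\kappa$), and $\mathcal D^\infty(\overline D)=\bigcap_{n\ge1}\mathcal D(\overline D^n)$. A complex structure is a real linear $I$ with $I^2=-1$; $\kappa$ is extended to $V_\kappa$ by continuity. *)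

theory Defs
  imports "HOL-Analysis.Analysis"
begin

text \<open>The pre-Hilbert space (V, kappa) is modelled as a dense linear subspace V of a
real Hilbert space 'a (its completion V_kappa); kappa is the inner product of 'a.\<close>

definition op_graph :: "'a set \<Rightarrow> ('a \<Rightarrow> 'a) \<Rightarrow> ('a \<times> 'a) set" where
  "op_graph V f = (\<lambda>v. (v, f v)) ` V"

definition closed_graph :: "'a::topological_space set \<Rightarrow> ('a \<Rightarrow> 'a) \<Rightarrow> ('a \<times> 'a) set" where
  "closed_graph V f = closure (op_graph V f)"

definition closure_dom :: "'a::topological_space set \<Rightarrow> ('a \<Rightarrow> 'a) \<Rightarrow> 'a set" where
  "closure_dom V f = {x. \<exists>y. (x, y) \<in> closed_graph V f}"

text \<open>The closure of the operator f (well defined whenever f is closable).\<close>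
definition closure_op :: "'a::topological_space set \<Rightarrow> ('a \<Rightarrow> 'a) \<Rightarrow> 'a \<Rightarrow> 'a" where
  "closure_op V f x = (THE y. (x, y) \<in> closed_graph V f)"

fun closure_pow_dom :: "'a::topological_space set \<Rightarrow> ('a \<Rightarrow> 'a) \<Rightarrow> nat \<Rightarrow> 'a set" where
  "closure_pow_dom V f 0 = UNIV"
| "closure_pow_dom V f (Suc n) =
     {x \<in> closure_dom V f. closure_op V f x \<in> closure_pow_dom V f n}"

definition smooth_dom :: "'a::topological_space set \<Rightarrow> ('a \<Rightarrow> 'a) \<Rightarrow> 'a set" where
  "smooth_dom V f = (\<Inter>n\<in>{1..}. closure_pow_dom V f n)"

end

theory Submission
  imports Defs "HOL-Computational_Algebra.Formal_Power_Series"
begin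



lemma b_summable_Cauchy: "summable f \<longleftrightarrow> (\<forall>e>0. \<exists>N. \<forall>m\<ge>N. \<forall>n. norm (sum f {m..<n}) < e)" (is "_ = ?rhs")
  for f :: "nat \<Rightarrow> 'a::{real_normed_vector,complete_space}"
proof
  assume f: "summable f"
  show ?rhs
  proof clarify
    fix e :: real
    assume "0 < e"
    then obtain M where M: "\<And>m n. \<lbrakk>m\<ge>M; n\<ge>M\<rbrakk> \<Longrightarrow> norm (sum f {..<m} - sum f {..<n}) < e"
      using f by (force simp add: summable_iff_convergent Cauchy_convergent_iff [symmetric] Cauchy_iff)
    have "norm (sum f {m..<n}) < e" if "m \<ge> M" for m n
    proof (cases m n rule: linorder_class.le_cases)
      assume "m \<le> n"
      then show ?thesis
        by (metis (mono_tags, opaque_lifting) M atLeast0LessThan order_trans sum_diff_nat_ivl that zero_le)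
    next
      assume "n \<le> m"
      then show ?thesis
        by (simp add: \<open>0 < e\<close>)
    qed
    then show "\<exists>N. \<forall>m\<ge>N. \<forall>n. norm (sum f {m..<n}) < e"
      by blast
  qed
next
  assume r: ?rhs
  then show "summable f"
    unfolding summable_iff_convergent Cauchy_convergent_iff [symmetric] Cauchy_iff
  proof clarify
    fix e :: real
    assume "0 < e"
    with r obtain N where N: "\<And>m n. m \<ge> N \<Longrightarrow> norm (sum f {m..<n}) < e"
      by blast
    have "norm (sum f {..<m} - sum f {..<n}) < e" if "m\<ge>N" "n\<ge>N" for m n
    proof (cases m n rule: linorder_class.le_cases)
      assume "m \<le> n"
      then show ?thesis
        by (metis N finite_lessThan lessThan_minus_lessThan lessThan_subset_iff norm_minus_commute sum_diff \<open>m\<ge>N\<close>)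
    next
      assume "n \<le> m"
      then show ?thesis
        by (metis N finite_lessThan lessThan_minus_lessThan lessThan_subset_iff sum_diff \<open>n\<ge>N\<close>)
    qed
    then show "\<exists>M. \<forall>m\<ge>M. \<forall>n\<ge>M. norm (sum f {..<m} - sum f {..<n}) < e"
      by blast
  qed
qed

lemma b_summable_norm_cancel: "summable (\<lambda>n. norm (f n)) \<Longrightarrow> summable f"
  for f :: "nat \<Rightarrow> 'a::{real_normed_vector,complete_space}"
  unfolding b_summable_Cauchy summable_Cauchy
  apply (erule all_forward imp_forward ex_forward | assumption)+
  apply (fastforce simp add: order_le_less_trans [OF norm_sum] order_le_less_trans [OF abs_ge_self])
  done

lemma b_summable_norm: "summable (\<lambda>n. norm (f n)) \<Longrightarrow> norm (suminf f) \<le> (\<Sum>n. norm (f n))"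
  for f :: "nat \<Rightarrow> 'a::{real_normed_vector,complete_space}"
proof -
  assume s: "summable (\<lambda>n. norm (f n))"
  have "(\<lambda>n. norm (\<Sum>i<n. f i)) \<longlonglongrightarrow> norm (suminf f)"
    by (intro tendsto_norm summable_LIMSEQ b_summable_norm_cancel[OF s])
  moreover have "(\<lambda>n. \<Sum>i<n. norm (f i)) \<longlonglongrightarrow> (\<Sum>n. norm (f n))"
    by (rule summable_LIMSEQ[OF s])
  ultimately show ?thesis
    by (rule LIMSEQ_le) (auto intro: norm_sum)
qed

lemma bl_add: "bounded_linear f \<Longrightarrow> f (x + y) = f x + f y"
  by (rule linear_add[OF bounded_linear.linear])
lemma bl_diff: "bounded_linear f \<Longrightarrow> f (x - y) = f x - f y"
  by (rule linear_diff[OF bounded_linear.linear])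
lemma bl_scale: "bounded_linear f \<Longrightarrow> f (c *\<^sub>R x) = c *\<^sub>R f x"
  by (rule linear_scale[OF bounded_linear.linear])
lemma bl_neg: "bounded_linear f \<Longrightarrow> f (- x) = - f x"
  by (rule linear_neg[OF bounded_linear.linear])
lemma bl_zero: "bounded_linear f \<Longrightarrow> f 0 = 0"
  by (rule linear_0[OF bounded_linear.linear])
lemma bl_sum: "bounded_linear f \<Longrightarrow> f (sum g A) = (\<Sum>a\<in>A. f (g a))"
  by (rule linear_sum[OF bounded_linear.linear])

lemma closure_subspace_add:
  fixes M :: "'a::real_normed_vector set"
  assumes "subspace M" "a \<in> closure M" "z \<in> M"
  shows "a + t *\<^sub>R z \<in> closure M"
proof -
  obtain s where s: "\<And>n. s n \<in> M" "s \<longlonglongrightarrow> a"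
    using assms(2) closure_sequential by blast
  have "(\<lambda>n. s n + t *\<^sub>R z) \<longlonglongrightarrow> a + t *\<^sub>R z"
    by (intro tendsto_intros s)
  moreover have "\<And>n. s n + t *\<^sub>R z \<in> M"
    using assms(1) s(1) assms(3) by (simp add: subspace_add subspace_scale)
  ultimately show ?thesis
    unfolding closure_sequential by (intro exI[of _ "\<lambda>n. s n + t *\<^sub>R z"]) auto
qed

lemma nearest_point:
  fixes S :: "'a::{real_inner,complete_space} set"
  assumes "closed S" "convex S" "S \<noteq> {}"
  obtains y where "y \<in> S" "\<And>z. z \<in> S \<Longrightarrow> norm (x - y) \<le> norm (x - z)"
proof -
  define d where "d = infdist x S"
  have d_le: "d \<le> norm (x - z)" if "z \<in> S" for z
    using infdist_le[OF that, of x] by (simp add: d_def dist_norm)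
  have d0: "0 \<le> d" by (simp add: d_def infdist_nonneg)
  have "\<exists>z\<in>S. norm (x - z) < d + 1 / (real n + 1)" for n
  proof -
    have "d < d + 1 / (real n + 1)" by simp
    then have "(INF a\<in>S. dist x a) < d + 1 / (real n + 1)"
      using assms(3) by (simp add: d_def infdist_notempty)
    then obtain z where "z \<in> S" "dist x z < d + 1 / (real n + 1)"
      using cINF_less_iff[OF assms(3) bdd_below_image_dist] by blast
    then show ?thesis by (auto simp: dist_norm)
  qed
  then obtain z where zS: "\<And>n. z n \<in> S" and zd: "\<And>n. norm (x - z n) < d + 1 / (real n + 1)"
    by metis
  define e where "e n = 1 / (real n + 1)" for n
  have e0: "0 < e n" "e n \<le> 1" for n by (auto simp: e_def field_simps)
  have para: "norm (z m - z n)^2 \<le> 2 * (2*d+1) * (e m + e n)" for m n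
  proof -
    have mid: "(1/2) *\<^sub>R (z m + z n) \<in> S"
      using convexD[OF assms(2) zS[of m] zS[of n], of "1/2" "1/2"] by (simp add: scaleR_add_right)
    have dm: "d \<le> norm (x - (1/2) *\<^sub>R (z m + z n))" using d_le[OF mid] .
    have pl: "norm (z m - z n)^2 = 2 * norm (x - z m)^2 + 2 * norm (x - z n)^2
              - 4 * norm (x - (1/2) *\<^sub>R (z m + z n))^2"
      unfolding power2_norm_eq_inner
      by (simp add: inner_diff_left inner_diff_right inner_add_left inner_add_right
            inner_commute algebra_simps)
    have a: "norm (x - z m)^2 \<le> (d + e m)^2"
      using zd[of m] by (intro power_mono) (auto simp: e_def)
    have b: "norm (x - z n)^2 \<le> (d + e n)^2"
      using zd[of n] by (intro power_mono) (auto simp: e_def)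
    have c: "d^2 \<le> norm (x - (1/2) *\<^sub>R (z m + z n))^2"
      using dm d0 by (intro power_mono) auto
    have em: "e m * e m \<le> e m" "e n * e n \<le> e n"
      using e0 by (auto simp: mult_le_cancel_left1)
    have dem: "0 \<le> d * e m" "0 \<le> d * e n" using d0 e0(1)[of m] e0(1)[of n] by auto
    have a': "norm (x - z m)^2 \<le> d*d + 2*(d*e m) + e m * e m"
      using a by (simp add: power2_eq_square algebra_simps)
    have b': "norm (x - z n)^2 \<le> d*d + 2*(d*e n) + e n * e n"
      using b by (simp add: power2_eq_square algebra_simps)
    have c': "d * d \<le> norm (x - (1/2) *\<^sub>R (z m + z n))^2"
      using c by (simp add: power2_eq_square)
    have goal: "2 * (2*d+1) * (e m + e n) = 4*(d*e m) + 4*(d*e n) + 2 * e m + 2 * e n"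
      by (simp add: algebra_simps)
    show ?thesis
      unfolding goal using pl a' b' c' em by linarith
  qed
  have "Cauchy z"
  proof (rule metric_CauchyI)
    fix r :: real assume r: "0 < r"
    define K where "K = 4 * (2*d+1)"
    have K: "0 < K" using d0 by (simp add: K_def)
    obtain N :: nat where N: "K / r^2 < real N + 1"
      by (metis reals_Archimedean2 add.commute less_add_one order_less_trans of_nat_Suc)
    show "\<exists>M. \<forall>m\<ge>M. \<forall>n\<ge>M. dist (z m) (z n) < r"
    proof (intro exI allI impI)
      fix m n assume mn: "N \<le> m" "N \<le> n"
      have "e m \<le> e N" "e n \<le> e N" using mn by (auto simp: e_def field_simps)
      moreover have "d * e m \<le> d * e N" "d * e n \<le> d * e N"
        using calculation d0 by (auto intro: mult_left_mono)
      ultimately have "norm (z m - z n)^2 \<le> K * e N"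
        using para[of m n] d0 unfolding K_def by (simp add: algebra_simps)
      also have "K * e N < r^2"
        using N r K by (simp add: e_def field_simps)
      finally have "norm (z m - z n)^2 < r^2" .
      then show "dist (z m) (z n) < r"
        using r by (simp add: dist_norm power_less_imp_less_base)
    qed
  qed
  then obtain y where y: "z \<longlonglongrightarrow> y" using Cauchy_convergent_iff convergent_def by blast
  have yS: "y \<in> S" using assms(1) zS y closed_sequentially by blast
  have "(\<lambda>n. norm (x - z n)) \<longlonglongrightarrow> norm (x - y)" by (intro tendsto_intros y)
  moreover have "(\<lambda>n. d + e n) \<longlonglongrightarrow> d + 0"
  proof -
    have "(\<lambda>n. 1 / (real n + 1)) \<longlonglongrightarrow> 0"
      using LIMSEQ_inverse_real_of_nat by (simp add: inverse_eq_divide add.commute)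
    then show ?thesis unfolding e_def by (intro tendsto_intros)
  qed
  ultimately have "norm (x - y) \<le> d + 0"
    using zd by (intro LIMSEQ_le[where X="\<lambda>n. norm (x - z n)"]) (auto simp: e_def less_imp_le)
  then show ?thesis using that yS d_le by fastforce
qed

lemma ortho_dense:
  fixes M :: "'a::{real_inner,complete_space} set"
  assumes "subspace M" "\<And>w. (\<And>m. m \<in> M \<Longrightarrow> inner w m = 0) \<Longrightarrow> w = 0"
  shows "closure M = UNIV"
proof -
  have "x \<in> closure M" for x
  proof -
    have ne: "closure M \<noteq> {}" using assms(1) subspace_0 closure_subset by blast
    have cv: "convex (closure M)" using assms(1) subspace_imp_convex convex_closure by blast
    obtain y where yS: "y \<in> closure M" and yn: "\<And>z. z \<in> closure M \<Longrightarrow> norm (x - y) \<le> norm (x - z)"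
      using nearest_point[OF closed_closure cv ne] by blast
    define w where "w = x - y"
    have "inner w m = 0" if m: "m \<in> M" for m
    proof -
      define b where "b = inner w m"
      define c where "c = inner m m"
      have c0: "0 \<le> c" by (simp add: c_def)
      define t where "t = b / (c + 1)"
      have "y + t *\<^sub>R m \<in> closure M" using closure_subspace_add[OF assms(1) yS m] .
      then have "norm w ^2 \<le> norm (w - t *\<^sub>R m) ^2"
        using yn unfolding w_def by (simp add: power_mono algebra_simps)
      then have "0 \<le> - 2 * t * b + t^2 * c"
        unfolding power2_norm_eq_inner b_def c_def
        by (simp add: inner_diff_left inner_diff_right inner_commute algebra_simps power2_eq_square)
      moreover have "(c+1)^2 * (- 2 * t * b + t^2 * c) = - 2 * b * b * (c+1) + b * b * c"
      proof -
        have ct: "(c+1)*t = b" using c0 by (simp add: t_def)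
        have "(c+1)^2 * (- 2 * t * b + t^2 * c) = -2*((c+1)*t)*b*(c+1) + ((c+1)*t)^2*c"
          by (simp add: algebra_simps power2_eq_square)
        also have "\<dots> = - 2 * b * b * (c+1) + b * b * c"
          unfolding ct by (simp add: power2_eq_square)
        finally show ?thesis .
      qed
      ultimately have "0 \<le> - 2 * b * b * (c+1) + b * b * c"
        by (metis zero_le_mult_iff zero_le_power2)
      then have "b * b * (c + 2) \<le> 0" by (simp add: algebra_simps)
      moreover have "0 < c + 2" using c0 by simp
      ultimately have "b * b \<le> 0" by (simp add: mult_le_0_iff)
      then have "b * b = 0" using zero_le_square[of b] by linarith
      then show ?thesis unfolding b_def by simp
    qed
    then have "w = 0" using assms(2) by blast
    then show ?thesis using yS by (simp add: w_def)
  qed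
  then show ?thesis by blast
qed


definition selfadj :: "('a::real_inner \<Rightarrow> 'a) \<Rightarrow> bool" where
  "selfadj T \<longleftrightarrow> (\<forall>x y. inner (T x) y = inner x (T y))"

definition posop :: "('a::real_inner \<Rightarrow> 'a) \<Rightarrow> bool" where
  "posop T \<longleftrightarrow> (\<forall>x. 0 \<le> inner (T x) x)"

lemma pos_CS:
  fixes T :: "'a::real_inner \<Rightarrow> 'a"
  assumes "linear T" "selfadj T" "posop T"
  shows "(inner (T x) y)^2 \<le> inner (T x) x * inner (T y) y"
proof -
  define a where "a = inner (T x) x"
  define b where "b = inner (T x) y"
  define c where "c = inner (T y) y"
  have q: "0 \<le> a + 2 * t * b + t^2 * c" for t
  proof -
    have "0 \<le> inner (T (x + t *\<^sub>R y)) (x + t *\<^sub>R y)" using assms(3) by (simp add: posop_def)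
    also have "T (x + t *\<^sub>R y) = T x + t *\<^sub>R T y"
      using assms(1) by (simp add: linear_add linear_scale)
    also have "inner (T x + t *\<^sub>R T y) (x + t *\<^sub>R y) = a + t * inner (T y) x + t * b + t^2 * c"
      by (simp add: a_def b_def c_def inner_add_left inner_add_right algebra_simps power2_eq_square)
    also have "inner (T y) x = b"
      using assms(2) by (simp add: selfadj_def b_def inner_commute)
    finally show ?thesis by (simp add: algebra_simps)
  qed
  have c0: "0 \<le> c" using assms(3) by (simp add: posop_def c_def)
  show ?thesis
  proof (cases "c = 0")
    case True
    have "b = 0"
    proof (rule ccontr)
      assume b: "b \<noteq> 0"
      have "0 \<le> a + 2 * (-(a+1)/(2*b)) * b" using q[of "-(a+1)/(2*b)"] True by simp
      also have "2 * (-(a+1)/(2*b)) * b = -(a+1)" using b by (simp add: field_simps)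
      finally show False by simp
    qed
    then show ?thesis using True by (simp add: b_def c_def)
  next
    case False
    then have cp: "0 < c" using c0 by simp
    define t where "t = - b / c"
    have ct: "c * t = - b" using cp by (simp add: t_def)
    have "c * (a + 2 * t * b + t^2 * c) = a * c + 2 * b * (c * t) + (c * t)^2"
      by (simp add: algebra_simps power2_eq_square)
    also have "\<dots> = a * c - b^2" unfolding ct by (simp add: power2_eq_square)
    finally have "0 \<le> a * c - b^2" using q[of t] cp by (metis zero_le_mult_iff less_imp_le)
    then show ?thesis by (simp add: a_def b_def c_def)
  qed
qed

lemma pos_zero:
  fixes T :: "'a::real_inner \<Rightarrow> 'a"
  assumes "linear T" "selfadj T" "posop T" "inner (T x) x = 0"
  shows "T x = 0"
proof -
  have "(inner (T x) (T x))^2 \<le> 0" using pos_CS[OF assms(1-3), of x "T x"] assms(4) by simp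
  then have "inner (T x) (T x) = 0" by simp
  then show ?thesis by simp
qed

definition sqc :: "nat \<Rightarrow> real" where
  "sqc n = (-1)^n * ((1/2) gchoose n)"

lemma sqc_0: "sqc 0 = 1" by (simp add: sqc_def)

definition sqg :: "nat \<Rightarrow> real" where
  "sqg m = ((real m - 1/2) gchoose m)"

lemma sqg_nonneg: "0 \<le> sqg m"
proof -
  have eq: "(sqg m) * fact m = (\<Prod>i = 0..<m. (real m - 1/2) - of_nat i)"
    unfolding sqg_def by (rule gbinomial_mult_fact')
  have "0 \<le> sqg m * fact m" unfolding eq by (intro prod_nonneg) auto
  moreover have "(0::real) < fact m" by simp
  ultimately show ?thesis by (smt (verit) zero_le_mult_iff)
qed

lemma sqc_partial: "(\<Sum>k\<le>m. sqc k) = sqg m"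
proof -
  have "(\<Sum>k\<le>m. sqc k) = (\<Sum>k\<le>m. ((1/2::real) gchoose k) * (-1)^k)"
    by (simp add: sqc_def mult.commute)
  also have "\<dots> = (-1)^m * ((1/2 - 1) gchoose m)" by (rule gbinomial_sum_lower_neg)
  also have "(1/2 - 1 :: real) = - (1/2)" by simp
  also have "((- (1/2::real)) gchoose m) = (-1)^m * ((1/2 + of_nat m - 1) gchoose m)"
    by (rule gbinomial_minus)
  also have "(1/2 + of_nat m - 1 :: real) = real m - 1/2" by simp
  finally show ?thesis by (simp add: sqg_def flip: power_add mult.assoc)
qed

lemma sqg_Suc: "sqg (Suc m) = sqg m * ((real m + 1/2) / real (Suc m))"
proof -
  have "sqg (Suc m) = (((real m - 1/2) + 1) gchoose (Suc m))"
    by (simp add: sqg_def algebra_simps)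
  also have "\<dots> = ((real m - 1/2) gchoose m) * (((real m - 1/2) + 1) / of_nat (Suc m))"
    by (rule gbinomial_rec)
  finally show ?thesis by (simp add: sqg_def algebra_simps)
qed

lemma sqc_nonpos: "0 < n \<Longrightarrow> sqc n \<le> 0"
proof -
  assume "0 < n"
  then obtain m where n: "n = Suc m" by (cases n) auto
  have "sqc n = sqg (Suc m) - sqg m"
    using sqc_partial[of "Suc m"] sqc_partial[of m] by (simp add: n)
  also have "sqg (Suc m) \<le> sqg m"
  proof -
    have le1: "(real m + 1/2) / real (Suc m) \<le> 1" by simp
    show ?thesis using mult_left_mono[OF le1 sqg_nonneg[of m]] unfolding sqg_Suc
      by simp
  qed
  then have "sqg (Suc m) - sqg m \<le> 0" by simp
  finally show ?thesis .
qed

lemma sqc_abs_partial: "(\<Sum>k\<le>m. \<bar>sqc k\<bar>) = 2 - sqg m"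
proof -
  have "(\<Sum>k\<le>m. \<bar>sqc k\<bar>) = (\<Sum>k\<le>m. (if k = 0 then 2 else 0) - sqc k)"
    by (intro sum.cong) (auto simp: sqc_0 sqc_nonpos abs_of_nonpos)
  also have "\<dots> = 2 - sqg m"
    by (simp add: sum_subtractf sqc_partial)
  finally show ?thesis .
qed

lemma sqc_abs_le: "(\<Sum>k<n. \<bar>sqc k\<bar>) \<le> 2"
proof -
  have "(\<Sum>k<n. \<bar>sqc k\<bar>) \<le> (\<Sum>k\<le>n. \<bar>sqc k\<bar>)"
    by (intro sum_mono2) auto
  also have "\<dots> \<le> 2" using sqc_abs_partial[of n] sqg_nonneg[of n] by simp
  finally show ?thesis .
qed

lemma sqc_summable: "summable (\<lambda>n. \<bar>sqc n\<bar>)"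
  by (rule summableI_nonneg_bounded[where x=2]) (auto intro: sqc_abs_le)

lemma sqc_suminf_le: "(\<Sum>n. \<bar>sqc n\<bar>) \<le> 2"
  by (rule suminf_le_const[OF sqc_summable sqc_abs_le])

lemma sqc_conv: "(\<Sum>i\<le>k. sqc i * sqc (k - i)) = (if k = 0 then 1 else if k = 1 then -1 else 0)"
proof -
  have "(\<Sum>i\<le>k. sqc i * sqc (k - i)) = (\<Sum>i\<in>{0..k}. (-1)^k * (((1/2::real) gchoose i) * ((1/2) gchoose (k - i))))"
  proof (intro sum.cong)
    fix i assume "i \<in> {0..k}"
    then have "(-1::real)^i * (-1)^(k-i) = (-1)^k" by (simp flip: power_add)
    then show "sqc i * sqc (k - i) = (-1)^k * (((1/2::real) gchoose i) * ((1/2) gchoose (k - i)))"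
      unfolding sqc_def by (metis (no_types, lifting) mult.assoc mult.left_commute)
  qed auto
  also have "\<dots> = (-1)^k * (\<Sum>i\<in>{0..k}. ((1/2::real) gchoose i) * ((1/2) gchoose (k - i)))"
    by (simp add: sum_distrib_left)
  also have "\<dots> = (-1)^k * ((1/2 + 1/2 :: real) gchoose k)"
    by (simp only: gbinomial_Vandermonde)
  also have "(1/2 + 1/2 :: real) = of_nat 1" by simp
  also have "(of_nat 1 :: real) gchoose k = of_nat (1 choose k)" by (simp only: binomial_gbinomial)
  finally show ?thesis
    by (cases k; cases "k - 1") auto
qed


lemma funpow_bl: "bounded_linear (Q::'a::real_normed_vector\<Rightarrow>'a) \<Longrightarrow> bounded_linear (Q ^^ n)"
proof (induction n)
  case 0 
  have "Q ^^ 0 = (\<lambda>x. x)" by (simp add: fun_eq_iff)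
  then show ?case by (metis bounded_linear_ident)
next
  case (Suc n)
  have "Q ^^ Suc n = (\<lambda>x. Q ((Q ^^ n) x))" by (simp add: fun_eq_iff)
  then show ?case using bounded_linear_compose[of Q "Q ^^ n"] Suc by simp
qed

lemma funpow_norm: "(\<And>x. norm ((Q::'a::real_normed_vector\<Rightarrow>'a) x) \<le> norm x) \<Longrightarrow> norm ((Q ^^ n) x) \<le> (norm x :: real)"
proof (induction n)
  case 0 then show ?case by simp
next
  case (Suc n) then show ?case using order_trans by (simp, blast)
qed

locale sqset =
  fixes Q :: "'a::{real_inner,complete_space} \<Rightarrow> 'a"
  assumes blQ: "bounded_linear Q" and nQ: "\<And>x. norm (Q x) \<le> norm x"
begin

definition S where "S x = (\<Sum>n. sqc n *\<^sub>R (Q ^^ n) x)"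
definition T where "T N x = (\<Sum>n<N. sqc n *\<^sub>R (Q ^^ n) x)"

lemma blQn: "bounded_linear (Q ^^ n)" by (rule funpow_bl[OF blQ])
lemma nQn: "norm ((Q ^^ n) x) \<le> norm x" by (rule funpow_norm[OF nQ])

lemma term_bound: "norm (sqc n *\<^sub>R (Q ^^ n) x) \<le> \<bar>sqc n\<bar> * norm x"
  using mult_left_mono[OF nQn[of n x] abs_ge_zero[of "sqc n"]] by simp

lemma summ_norm: "summable (\<lambda>n. norm (sqc n *\<^sub>R (Q ^^ n) x))"
  by (rule summable_comparison_test'[OF summable_mult2[OF sqc_summable, of "norm x"]])
     (simp add: mult_left_mono[OF nQn])

lemma summ: "summable (\<lambda>n. sqc n *\<^sub>R (Q ^^ n) x)"
  by (rule b_summable_norm_cancel[OF summ_norm])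

lemma S_norm: "norm (S x) \<le> norm x * 2"
proof -
  have "norm (S x) \<le> (\<Sum>n. norm (sqc n *\<^sub>R (Q ^^ n) x))"
    unfolding S_def by (rule b_summable_norm[OF summ_norm])
  also have "\<dots> \<le> (\<Sum>n. \<bar>sqc n\<bar> * norm x)"
    by (intro suminf_le term_bound summ_norm summable_mult2 sqc_summable)
  also have "\<dots> = (\<Sum>n. \<bar>sqc n\<bar>) * norm x"
    by (rule suminf_mult2[OF sqc_summable, symmetric])
  also have "\<dots> \<le> 2 * norm x"
    by (intro mult_right_mono sqc_suminf_le) auto
  finally show ?thesis by simp
qed

lemma S_add: "S (x + y) = S x + S y"
proof -
  have "S (x + y) = (\<Sum>n. sqc n *\<^sub>R (Q ^^ n) x + sqc n *\<^sub>R (Q ^^ n) y)"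
    unfolding S_def by (simp add: bl_add[OF blQn] scaleR_add_right)
  also have "\<dots> = S x + S y"
    unfolding S_def by (rule suminf_add[OF summ summ, symmetric])
  finally show ?thesis .
qed

lemma S_scale: "S (c *\<^sub>R x) = c *\<^sub>R S x"
proof -
  have "S (c *\<^sub>R x) = (\<Sum>n. c *\<^sub>R (sqc n *\<^sub>R (Q ^^ n) x))"
    unfolding S_def by (simp add: bl_scale[OF blQn] mult.commute)
  also have "\<dots> = c *\<^sub>R S x"
    unfolding S_def by (rule suminf_scaleR_right[OF summ, symmetric])
  finally show ?thesis .
qed

lemma S_bl: "bounded_linear S"
  by (rule bounded_linear_intro[OF S_add S_scale S_norm])

lemma T_lim: "(\<lambda>N. T N x) \<longlonglongrightarrow> S x"
  unfolding T_def S_def by (rule summable_LIMSEQ[OF summ])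

lemma T_norm: "norm (T N x) \<le> 2 * norm x"
proof -
  have "norm (T N x) \<le> (\<Sum>n<N. norm (sqc n *\<^sub>R (Q ^^ n) x))"
    unfolding T_def by (rule norm_sum)
  also have "\<dots> \<le> (\<Sum>n<N. \<bar>sqc n\<bar> * norm x)"
    by (intro sum_mono term_bound)
  also have "\<dots> = (\<Sum>n<N. \<bar>sqc n\<bar>) * norm x" by (simp add: sum_distrib_right)
  also have "\<dots> \<le> 2 * norm x" by (intro mult_right_mono sqc_abs_le) auto
  finally show ?thesis .
qed

lemma T_diff: "T N (x - y) = T N x - T N y"
  unfolding T_def by (simp add: bl_diff[OF blQn] scaleR_diff_right sum_subtractf)

lemma T_sq: "T N (T N x) = (\<Sum>(i,j)\<in>{..<N}\<times>{..<N}. (sqc i * sqc j) *\<^sub>R (Q ^^ (i + j)) x)"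
proof -
  have "T N (T N x) = (\<Sum>i<N. sqc i *\<^sub>R (Q ^^ i) (\<Sum>j<N. sqc j *\<^sub>R (Q ^^ j) x))"
    unfolding T_def ..
  also have "\<dots> = (\<Sum>i<N. \<Sum>j<N. (sqc i * sqc j) *\<^sub>R (Q ^^ (i + j)) x)"
    by (simp add: bl_sum[OF blQn] bl_scale[OF blQn] scaleR_sum_right
                  funpow_add)
  also have "\<dots> = (\<Sum>(i,j)\<in>{..<N}\<times>{..<N}. (sqc i * sqc j) *\<^sub>R (Q ^^ (i + j)) x)"
    by (rule sum.cartesian_product)
  finally show ?thesis .
qed

lemma conv_sum: "(\<Sum>k<Suc (Suc M). (\<Sum>i\<le>k. sqc i * sqc (k - i)) *\<^sub>R (Q ^^ k) x) = x - Q x"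
proof (induction M)
  case 0 then show ?case by (simp add: sqc_conv)
next
  case (Suc M)
  have "(\<Sum>i\<le>Suc (Suc M). sqc i * sqc (Suc (Suc M) - i)) = 0" by (simp only: sqc_conv) simp
  then show ?case using Suc by (simp del: atMost_Suc)
qed

lemma T_tri: "2 \<le> N \<Longrightarrow> (\<Sum>(i,j)\<in>{(i,j). i + j < N}. (sqc i * sqc j) *\<^sub>R (Q ^^ (i + j)) x) = x - Q x"
proof -
  assume N: "2 \<le> N"
  then obtain M where M: "N = Suc (Suc M)" by (metis add_2_eq_Suc le_Suc_ex)
  have "(\<Sum>(i,j)\<in>{(i,j). i + j < N}. (sqc i * sqc j) *\<^sub>R (Q ^^ (i + j)) x)
      = (\<Sum>k<N. \<Sum>i\<le>k. (sqc i * sqc (k - i)) *\<^sub>R (Q ^^ (i + (k - i))) x)"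
    by (rule sum.triangle_reindex)
  also have "\<dots> = (\<Sum>k<N. (\<Sum>i\<le>k. sqc i * sqc (k - i)) *\<^sub>R (Q ^^ k) x)"
    by (intro sum.cong refl) (simp add: scaleR_sum_left)
  also have "\<dots> = x - Q x" unfolding M by (rule conv_sum)
  finally show ?thesis .
qed

definition S1 :: "nat \<Rightarrow> (nat \<times> nat) set" where "S1 N = {..<N} \<times> {..<N}"
definition S2 :: "nat \<Rightarrow> (nat \<times> nat) set" where "S2 N = {(i,j). i + j < N}"
definition ff :: "nat \<times> nat \<Rightarrow> real" where "ff = (\<lambda>(i,j). \<bar>sqc i\<bar> * \<bar>sqc j\<bar>)"

lemma S2_sub: "S2 N \<subseteq> S1 N" by (auto simp: S1_def S2_def)
lemma S1_fin: "finite (S1 N)" by (simp add: S1_def)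
lemma S2_fin: "finite (S2 N)" using finite_subset[OF S2_sub S1_fin] .

lemma ff_lim: "(\<lambda>N. sum ff (S1 N) - sum ff (S2 N)) \<longlonglongrightarrow> 0"
proof -
  define L where "L = (\<Sum>n. \<bar>sqc n\<bar>)"
  have "(\<lambda>N. (\<Sum>i<N. \<bar>sqc i\<bar>) * (\<Sum>j<N. \<bar>sqc j\<bar>)) \<longlonglongrightarrow> L * L"
    unfolding L_def by (intro tendsto_mult summable_LIMSEQ sqc_summable)
  moreover have "sum ff (S1 N) = (\<Sum>i<N. \<bar>sqc i\<bar>) * (\<Sum>j<N. \<bar>sqc j\<bar>)" for N
    unfolding S1_def ff_def by (simp add: sum_product sum.cartesian_product)
  ultimately have 1: "(\<lambda>N. sum ff (S1 N)) \<longlonglongrightarrow> L * L" by simp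
  have "(\<lambda>k. \<Sum>i\<le>k. \<bar>sqc i\<bar> * \<bar>sqc (k - i)\<bar>) sums (L * L)"
    unfolding L_def by (rule Cauchy_product_sums) (simp_all add: sqc_summable)
  then have "(\<lambda>N. \<Sum>k<N. \<Sum>i\<le>k. \<bar>sqc i\<bar> * \<bar>sqc (k - i)\<bar>) \<longlonglongrightarrow> L * L"
    by (simp add: sums_def)
  moreover have "sum ff (S2 N) = (\<Sum>k<N. \<Sum>i\<le>k. \<bar>sqc i\<bar> * \<bar>sqc (k - i)\<bar>)" for N
    unfolding S2_def ff_def by (rule sum.triangle_reindex)
  ultimately have 2: "(\<lambda>N. sum ff (S2 N)) \<longlonglongrightarrow> L * L" by simp
  show ?thesis using tendsto_diff[OF 1 2] by simp
qed

lemma S_sq: "S (S x) = x - Q x"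
proof -
  define g where "g = (\<lambda>(i,j). (sqc i * sqc j) *\<^sub>R (Q ^^ (i + j)) x)"
  have A: "(\<lambda>N. T N (T N x)) \<longlonglongrightarrow> S (S x)"
  proof -
    have "(\<lambda>N. T N (T N x) - S (S x)) \<longlonglongrightarrow> 0"
    proof (rule Lim_null_comparison)
      show "\<forall>\<^sub>F N in sequentially. norm (T N (T N x) - S (S x))
             \<le> 2 * norm (T N x - S x) + norm (T N (S x) - S (S x))"
      proof (intro always_eventually allI)
        fix N
        have "T N (T N x) - S (S x) = T N (T N x - S x) + (T N (S x) - S (S x))"
          by (simp add: T_diff)
        then have "norm (T N (T N x) - S (S x)) \<le> norm (T N (T N x - S x)) + norm (T N (S x) - S (S x))"
          by (metis norm_triangle_ineq)
        then show "norm (T N (T N x) - S (S x)) \<le> 2 * norm (T N x - S x) + norm (T N (S x) - S (S x))"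
          using T_norm[of N "T N x - S x"] by linarith
      qed
      have "(\<lambda>N. T N x - S x) \<longlonglongrightarrow> 0" using T_lim LIM_zero by blast
      moreover have "(\<lambda>N. T N (S x) - S (S x)) \<longlonglongrightarrow> 0" using T_lim LIM_zero by blast
      ultimately show "(\<lambda>N. 2 * norm (T N x - S x) + norm (T N (S x) - S (S x))) \<longlonglongrightarrow> 0"
        using tendsto_add[OF tendsto_mult_right_zero[OF tendsto_norm_zero] tendsto_norm_zero] by fastforce
    qed
    then show ?thesis by (rule LIM_zero_cancel)
  qed
  have B: "(\<lambda>N. T N (T N x)) \<longlonglongrightarrow> x - Q x"
  proof -
    have "(\<lambda>N. T N (T N x) - (x - Q x)) \<longlonglongrightarrow> 0"
    proof (rule Lim_null_comparison)
      show "\<forall>\<^sub>F N in sequentially. norm (T N (T N x) - (x - Q x)) \<le> (sum ff (S1 N) - sum ff (S2 N)) * norm x"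
        unfolding eventually_sequentially
      proof (intro exI allI impI)
        fix N :: nat assume N: "2 \<le> N"
        have "T N (T N x) - (x - Q x) = sum g (S1 N) - sum g (S2 N)"
          using T_sq[of N] T_tri[OF N] by (simp add: g_def S1_def S2_def)
        also have "\<dots> = sum g (S1 N - S2 N)"
          by (rule sum_diff[OF S1_fin S2_sub, symmetric])
        finally have "norm (T N (T N x) - (x - Q x)) = norm (sum g (S1 N - S2 N))" by simp
        also have "\<dots> \<le> (\<Sum>p\<in>S1 N - S2 N. norm (g p))" by (rule norm_sum)
        also have "\<dots> \<le> (\<Sum>p\<in>S1 N - S2 N. ff p * norm x)"
        proof (intro sum_mono)
          fix p :: "nat \<times> nat"
          obtain i j where p: "p = (i,j)" by (cases p)
          show "norm (g p) \<le> ff p * norm x"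
            using nQn[of "i+j" x] by (simp add: p g_def ff_def abs_mult mult_left_mono)
        qed
        also have "\<dots> = sum ff (S1 N - S2 N) * norm x" by (simp add: sum_distrib_right)
        also have "sum ff (S1 N - S2 N) = sum ff (S1 N) - sum ff (S2 N)"
          by (rule sum_diff[OF S1_fin S2_sub])
        finally show "norm (T N (T N x) - (x - Q x)) \<le> (sum ff (S1 N) - sum ff (S2 N)) * norm x" .
      qed
      show "(\<lambda>N. (sum ff (S1 N) - sum ff (S2 N)) * norm x) \<longlonglongrightarrow> 0"
        using tendsto_mult_left_zero[OF ff_lim] by simp
    qed
    then show ?thesis by (rule LIM_zero_cancel)
  qed
  show ?thesis using LIMSEQ_unique[OF A B] .
qed

lemma S_commute:
  assumes C: "bounded_linear C" and CQ: "\<And>y. C (Q y) = Q (C y)"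
  shows "C (S x) = S (C x)"
proof -
  have CQn: "C ((Q ^^ n) y) = (Q ^^ n) (C y)" for n y
    by (induction n) (simp_all add: CQ)
  have "C (S x) = (\<Sum>n. C (sqc n *\<^sub>R (Q ^^ n) x))"
    unfolding S_def by (rule bounded_linear.suminf[OF C summ])
  also have "\<dots> = S (C x)"
    unfolding S_def by (simp add: bl_scale[OF C] CQn)
  finally show ?thesis .
qed

lemma S_selfadj:
  assumes "selfadj Q" shows "selfadj S"
proof -
  have Qn: "inner ((Q ^^ n) x) y = inner x ((Q ^^ n) y)" for n x y
  proof (induction n arbitrary: x y)
    case 0 then show ?case by simp
  next
    case (Suc n)
    have "inner ((Q ^^ Suc n) x) y = inner ((Q ^^ n) x) (Q y)"
      using assms by (simp add: selfadj_def)
    also have "\<dots> = inner x ((Q ^^ n) (Q y))" by (rule Suc)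
    also have "(Q ^^ n) (Q y) = (Q ^^ Suc n) y" by (simp add: funpow_Suc_right del: funpow.simps)
    finally show ?case .
  qed
  have "inner (S x) y = inner x (S y)" for x y
  proof -
    have "inner (S x) y = (\<Sum>n. inner (sqc n *\<^sub>R (Q ^^ n) x) y)"
      unfolding S_def by (rule bounded_linear.suminf[OF bounded_linear_inner_left summ])
    also have "\<dots> = (\<Sum>n. inner x (sqc n *\<^sub>R (Q ^^ n) y))"
      by (simp add: Qn)
    also have "\<dots> = inner x (S y)"
      unfolding S_def by (rule bounded_linear.suminf[OF bounded_linear_inner_right summ, symmetric])
    finally show ?thesis .
  qed
  then show ?thesis by (simp add: selfadj_def)
qed

lemma S_pos: "0 \<le> inner (S x) x"
proof -
  define h where "h = (\<lambda>n. sqc n * inner ((Q ^^ n) x) x)"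
  have hb: "\<bar>h n\<bar> \<le> \<bar>sqc n\<bar> * (norm x * norm x)" for n
  proof -
    have "\<bar>inner ((Q ^^ n) x) x\<bar> \<le> norm ((Q ^^ n) x) * norm x" by (rule Cauchy_Schwarz_ineq2)
    also have "\<dots> \<le> norm x * norm x" by (intro mult_right_mono nQn) auto
    finally show ?thesis unfolding h_def abs_mult by (intro mult_left_mono) auto
  qed
  have sumh: "summable h"
    by (rule summable_comparison_test'[OF summable_mult2[OF sqc_summable]]) (use hb in auto)
  have "inner (S x) x = (\<Sum>n. inner (sqc n *\<^sub>R (Q ^^ n) x) x)"
    unfolding S_def by (rule bounded_linear.suminf[OF bounded_linear_inner_left summ])
  also have "\<dots> = suminf h" by (simp add: h_def)
  also have "\<dots> = h 0 + (\<Sum>n. h (Suc n))" using suminf_split_head[OF sumh] by simp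
  finally have eq: "inner (S x) x = h 0 + (\<Sum>n. h (Suc n))" .
  have h0: "h 0 = norm x * norm x" by (simp add: h_def sqc_0 norm_eq_sqrt_inner)
  have ss: "summable (\<lambda>n. \<bar>sqc (Suc n)\<bar>)" using sqc_summable summable_Suc_iff[of "\<lambda>n. \<bar>sqc n\<bar>"] by simp
  have "(\<Sum>n. \<bar>sqc (Suc n)\<bar>) = (\<Sum>n. \<bar>sqc n\<bar>) - 1"
    using suminf_split_head[OF sqc_summable] by (simp add: sqc_0)
  then have ss1: "(\<Sum>n. \<bar>sqc (Suc n)\<bar>) \<le> 1" using sqc_suminf_le by simp
  have "- (\<Sum>n. h (Suc n)) \<le> (\<Sum>n. \<bar>sqc (Suc n)\<bar> * (norm x * norm x))"
  proof -
    have "- (\<Sum>n. h (Suc n)) = (\<Sum>n. - h (Suc n))"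
      using sumh by (simp add: summable_Suc_iff suminf_minus)
    also have "\<dots> \<le> (\<Sum>n. \<bar>sqc (Suc n)\<bar> * (norm x * norm x))"
    proof (rule suminf_le)
      show "\<And>n. - h (Suc n) \<le> \<bar>sqc (Suc n)\<bar> * (norm x * norm x)" using hb by (smt (verit))
      show "summable (\<lambda>n. - h (Suc n))" using sumh by (simp add: summable_Suc_iff summable_minus)
      show "summable (\<lambda>n. \<bar>sqc (Suc n)\<bar> * (norm x * norm x))" by (intro summable_mult2 ss)
    qed
    finally show ?thesis .
  qed
  also have "\<dots> = (\<Sum>n. \<bar>sqc (Suc n)\<bar>) * (norm x * norm x)"
    by (rule suminf_mult2[OF ss, symmetric])
  also have "\<dots> \<le> norm x * norm x" using ss1 suminf_nonneg[OF ss] by (intro mult_left_le_one_le) auto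
  finally show ?thesis using eq h0 by linarith
qed

end


lemma op_sqrt:
  fixes T :: "'a::{real_inner,complete_space} \<Rightarrow> 'a"
  assumes blT: "bounded_linear T" and saT: "selfadj T" and posT: "posop T"
  obtains S where "bounded_linear S" "selfadj S" "posop S" "\<And>x. S (S x) = T x"
    "\<And>C y. bounded_linear C \<Longrightarrow> (\<And>y. C (T y) = T (C y)) \<Longrightarrow> C (S y) = S (C y)"
proof -
  obtain K where K: "0 < K" "\<And>x. norm (T x) \<le> norm x * K"
    using bounded_linear.pos_bounded[OF blT] by blast
  define Q where "Q = (\<lambda>x. x - (1/K) *\<^sub>R T x)"
  have blQ: "bounded_linear Q"
    unfolding Q_def
    by (intro bounded_linear_sub bounded_linear_ident bounded_linear_compose[OF bounded_linear_scaleR_right blT])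
  have saQ: "selfadj Q"
    using saT by (simp add: selfadj_def Q_def inner_diff_left inner_diff_right)
  have Tle: "inner (T x) x \<le> K * (norm x * norm x)" for x
  proof -
    have "inner (T x) x \<le> norm (T x) * norm x" by (rule norm_cauchy_schwarz)
    also have "\<dots> \<le> (norm x * K) * norm x" by (intro mult_right_mono K(2)) auto
    finally show ?thesis by (simp add: algebra_simps)
  qed
  have Qx: "inner (Q x) x = norm x * norm x - inner (T x) x / K" for x
    by (simp add: Q_def inner_diff_left norm_eq_sqrt_inner)
  have posQ: "posop Q"
  proof -
    have "0 \<le> inner (Q x) x" for x
    proof -
      have "inner (T x) x / K \<le> norm x * norm x" using Tle[of x] K(1) by (simp add: field_simps)
      then show ?thesis unfolding Qx by simp
    qed
    then show ?thesis by (simp add: posop_def)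
  qed
  have Qle: "inner (Q x) x \<le> norm x * norm x" for x
    using posT K(1) unfolding Qx posop_def by (simp add: divide_nonneg_pos)
  have nQ: "norm (Q x) \<le> norm x" for x
  proof -
    have "(inner (Q x) (Q x))^2 \<le> inner (Q x) x * inner (Q (Q x)) (Q x)"
      by (rule pos_CS[OF bounded_linear.linear[OF blQ] saQ posQ])
    also have "\<dots> \<le> (norm x * norm x) * (norm (Q x) * norm (Q x))"
      using posQ by (intro mult_mono Qle) (auto simp: posop_def)
    finally have quart: "(norm (Q x) * norm (Q x)) * (norm (Q x) * norm (Q x)) \<le> (norm x * norm x) * (norm (Q x) * norm (Q x))"
      by (simp add: power2_eq_square norm_eq_sqrt_inner)
    then show ?thesis
    proof (cases "norm (Q x) = 0")
      case False
      then have "0 < norm (Q x) * norm (Q x)" by simp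
      then have "norm (Q x) * norm (Q x) \<le> norm x * norm x"
        using quart by (simp add: mult_le_cancel_right)
      then show ?thesis by (metis mult_mono' norm_ge_zero not_le mult_strict_mono')
    qed simp
  qed
  interpret sq: sqset Q using blQ nQ by (simp add: sqset_def)
  define S where "S = (\<lambda>x. sqrt K *\<^sub>R sq.S x)"
  have blS: "bounded_linear S"
    unfolding S_def by (rule bounded_linear_compose[OF bounded_linear_scaleR_right sq.S_bl])
  have SS: "S (S x) = T x" for x
  proof -
    have "S (S x) = sqrt K *\<^sub>R (sqrt K *\<^sub>R sq.S (sq.S x))"
      unfolding S_def by (simp add: bl_scale[OF sq.S_bl])
    also have "\<dots> = K *\<^sub>R (x - Q x)" using K(1) by (simp add: sq.S_sq)
    also have "\<dots> = T x" using K(1) by (simp add: Q_def)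
    finally show ?thesis .
  qed
  have saS: "selfadj S"
    using sq.S_selfadj[OF saQ] by (simp add: selfadj_def S_def)
  have posS: "posop S"
    using sq.S_pos K(1) by (simp add: posop_def S_def)
  have comm: "C (S y) = S (C y)" if C: "bounded_linear C" and CT: "\<And>y. C (T y) = T (C y)" for C y
  proof -
    have "C (Q z) = Q (C z)" for z
      by (simp add: Q_def bl_diff[OF C] bl_scale[OF C] CT)
    then have "C (sq.S y) = sq.S (C y)" by (rule sq.S_commute[OF C])
    then show ?thesis by (simp add: S_def bl_scale[OF C])
  qed
  show ?thesis using that[OF blS saS posS SS comm] by blast
qed


lemma dense_eq:
  fixes h1 h2 :: "'a::topological_space \<Rightarrow> 'b::t2_space"
  assumes "continuous_on UNIV h1" "continuous_on UNIV h2" "closure S = UNIV"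
    "\<And>x. x \<in> S \<Longrightarrow> h1 x = h2 x"
  shows "h1 x = h2 x"
proof -
  have "closed {x. h1 x = h2 x}"
    using assms(1,2) by (intro closed_Collect_eq) auto
  moreover have "S \<subseteq> {x. h1 x = h2 x}" using assms(4) by blast
  ultimately have "closure S \<subseteq> {x. h1 x = h2 x}" by (intro closure_minimal)
  then show ?thesis using assms(3) by blast
qed

lemma dense_le:
  fixes h1 h2 :: "'a::topological_space \<Rightarrow> real"
  assumes "continuous_on UNIV h1" "continuous_on UNIV h2" "closure S = UNIV"
    "\<And>x. x \<in> S \<Longrightarrow> h1 x \<le> h2 x"
  shows "h1 x \<le> h2 x"
proof -
  have "closed {x. h1 x \<le> h2 x}"
    using assms(1,2) by (intro closed_Collect_le) auto
  moreover have "S \<subseteq> {x. h1 x \<le> h2 x}" using assms(4) by blast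
  ultimately have "closure S \<subseteq> {x. h1 x \<le> h2 x}" by (intro closure_minimal)
  then show ?thesis using assms(3) by blast
qed

lemma bl_cont: "bounded_linear f \<Longrightarrow> continuous_on UNIV f"
  by (simp add: linear_continuous_on)

lemma bl_extend:
  fixes f :: "'a::real_normed_vector \<Rightarrow> 'b::{real_normed_vector,complete_space}"
  assumes X: "subspace X" "closure X = UNIV"
    and fadd: "\<And>x y. x \<in> X \<Longrightarrow> y \<in> X \<Longrightarrow> f (x + y) = f x + f y"
    and fscale: "\<And>x c. x \<in> X \<Longrightarrow> f (c *\<^sub>R x) = c *\<^sub>R f x"
    and fbound: "\<And>x. x \<in> X \<Longrightarrow> norm (f x) \<le> K * norm x"
  obtains g where "bounded_linear g" "\<And>x. x \<in> X \<Longrightarrow> g x = f x" "\<And>x. norm (g x) \<le> K * norm x"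
proof -
  have fdiff: "f (x - y) = f x - f y" if "x \<in> X" "y \<in> X" for x y
  proof -
    have y': "(-1) *\<^sub>R y \<in> X" using X(1) that(2) by (rule subspace_scale)
    have "f (x - y) = f (x + (-1) *\<^sub>R y)" by simp
    also have "\<dots> = f x + f ((-1) *\<^sub>R y)" by (rule fadd[OF that(1) y'])
    also have "f ((-1) *\<^sub>R y) = (-1) *\<^sub>R f y" by (rule fscale[OF that(2)])
    finally show ?thesis by simp
  qed
  have uc: "uniformly_continuous_on X f"
    unfolding uniformly_continuous_on_def
  proof (intro allI impI)
    fix e :: real assume e: "0 < e"
    show "\<exists>d>0. \<forall>x\<in>X. \<forall>x'\<in>X. dist x' x < d \<longrightarrow> dist (f x') (f x) < e"
    proof (intro exI[of _ "e / (\<bar>K\<bar> + 1)"] conjI ballI impI)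
      show "0 < e / (\<bar>K\<bar> + 1)" using e by simp
      fix x x' assume xx: "x \<in> X" "x' \<in> X" and d: "dist x' x < e / (\<bar>K\<bar> + 1)"
      have "dist (f x') (f x) = norm (f (x' - x))" using fdiff[OF xx(2,1)] by (simp add: dist_norm)
      also have "\<dots> \<le> K * norm (x' - x)" using fbound X(1) xx by (simp add: subspace_diff)
      also have "\<dots> \<le> (\<bar>K\<bar> + 1) * norm (x' - x)" by (intro mult_right_mono) auto
      also have "\<dots> < (\<bar>K\<bar> + 1) * (e / (\<bar>K\<bar> + 1))"
        using d by (intro mult_strict_left_mono) (auto simp: dist_norm)
      also have "\<dots> = e" by simp
      finally show "dist (f x') (f x) < e" .
    qed
  qed
  obtain g where guc: "uniformly_continuous_on (closure X) g" and gf: "\<And>x. x \<in> X \<Longrightarrow> f x = g x"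
    using uniformly_continuous_on_extension_on_closure[OF uc] by metis
  have gc: "continuous_on UNIV g" using uniformly_continuous_imp_continuous[OF guc] X(2) by simp
  have gcp: "continuous_on UNIV (\<lambda>p::'a\<times>'a. g (fst p + snd p))"
    by (intro continuous_on_compose2[OF gc] continuous_intros) auto
  have gcp2: "continuous_on UNIV (\<lambda>p::'a\<times>'a. g (fst p) + g (snd p))"
    by (intro continuous_intros continuous_on_compose2[OF gc]) auto
  have cXX: "closure (X \<times> X) = UNIV" using X(2) by (simp add: closure_Times)
  have gadd: "g (x + y) = g x + g y" for x y
    using dense_eq[OF gcp gcp2 cXX, of "(x,y)"] X(1) by (auto simp: gf[symmetric] fadd subspace_add)
  have gscale: "g (c *\<^sub>R x) = c *\<^sub>R g x" for c x
  proof -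
    have c1: "continuous_on UNIV (\<lambda>x. g (c *\<^sub>R x))"
      by (intro continuous_on_compose2[OF gc] continuous_intros) auto
    have c2: "continuous_on UNIV (\<lambda>x. c *\<^sub>R g x)"
      by (intro continuous_intros gc)
    show ?thesis
    proof (rule dense_eq[OF c1 c2 X(2)])
      fix x assume x: "x \<in> X"
      then have "c *\<^sub>R x \<in> X" using X(1) by (simp add: subspace_scale)
      then show "g (c *\<^sub>R x) = c *\<^sub>R g x" using x by (simp add: gf[symmetric] fscale)
    qed
  qed
  have gbound: "norm (g x) \<le> K * norm x" for x
  proof -
    have c1: "continuous_on UNIV (\<lambda>x. norm (g x))" by (intro continuous_intros gc)
    have c2: "continuous_on UNIV (\<lambda>x. K * norm x)" by (intro continuous_intros)
    show ?thesis
    proof (rule dense_le[OF c1 c2 X(2)])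
      fix x assume x: "x \<in> X"
      then show "norm (g x) \<le> K * norm x" by (simp add: gf[symmetric] fbound)
    qed
  qed
  have "bounded_linear g"
    by (rule bounded_linear_intro[where K=K]) (auto simp: gadd gscale gbound mult.commute)
  then show ?thesis using that gf gbound by metis
qed

lemma dense_range_selfadj:
  fixes T :: "'a::{real_inner,complete_space} \<Rightarrow> 'a"
  assumes "bounded_linear T" "selfadj T" "\<And>x. T x = 0 \<Longrightarrow> x = 0"
  shows "closure (range T) = UNIV"
proof (rule ortho_dense)
  show "subspace (range T)"
    by (rule linear_subspace_image[OF bounded_linear.linear[OF assms(1)] subspace_UNIV])
  fix w assume w: "\<And>m. m \<in> range T \<Longrightarrow> inner w m = 0"
  have "inner (T w) (T w) = 0"
    using w[of "T (T w)"] assms(2) by (simp add: selfadj_def inner_commute)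
  then show "w = 0" using assms(3) by simp
qed


lemma polar:
  fixes B :: "'a::{real_inner,complete_space} \<Rightarrow> 'a"
  assumes blB: "bounded_linear B" and skew: "\<And>x y. inner (B x) y = - inner x (B y)"
    and injB: "\<And>x. B x = 0 \<Longrightarrow> x = 0"
  obtains J M where "bounded_linear J" "bounded_linear M" "selfadj M" "posop M"
    "\<And>x. M x = 0 \<Longrightarrow> x = 0" "\<And>x. J (M x) = B x" "\<And>x. J (J x) = - x"
    "\<And>x y. inner (J x) (J y) = inner x y"
    "\<And>C y. bounded_linear C \<Longrightarrow> (\<And>y. C (B y) = B (C y)) \<Longrightarrow> C (J y) = J (C y)"
    "\<And>C y. bounded_linear C \<Longrightarrow> (\<And>y. C (B y) = B (C y)) \<Longrightarrow> C (M y) = M (C y)"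
proof -
  define T0 where "T0 = (\<lambda>x. - B (B x))"
  have blT0: "bounded_linear T0"
    unfolding T0_def by (intro bounded_linear_minus bounded_linear_compose[OF blB blB])
  have saT0: "selfadj T0"
    unfolding selfadj_def T0_def
  proof (intro allI)
    fix x y
    show "inner (- B (B x)) y = inner x (- B (B y))"
      using skew[of "B x" y] skew[of x "B y"] by simp
  qed
  have posT0: "posop T0"
    unfolding posop_def T0_def
  proof
    fix x show "0 \<le> inner (- B (B x)) x" using skew[of "B x" x] by simp
  qed
  obtain M where blM: "bounded_linear M" and saM: "selfadj M" and posM: "posop M"
    and MM: "\<And>x. M (M x) = T0 x"
    and commM: "\<And>C y. bounded_linear C \<Longrightarrow> (\<And>y. C (T0 y) = T0 (C y)) \<Longrightarrow> C (M y) = M (C y)"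
    using op_sqrt[OF blT0 saT0 posT0] by metis
  have normM: "norm (M x) = norm (B x)" for x
  proof -
    have "inner (M x) (M x) = inner (M (M x)) x" using saM by (simp add: selfadj_def)
    also have "\<dots> = inner (B x) (B x)" using skew[of "B x" x] by (simp add: MM T0_def inner_commute)
    finally show ?thesis by (simp add: norm_eq_sqrt_inner)
  qed
  have injM: "x = 0" if "M x = 0" for x
    using normM[of x] that injB by simp
  have commT0: "C (T0 y) = T0 (C y)" if C: "bounded_linear C" and CB: "\<And>y. C (B y) = B (C y)" for C y
    by (simp add: T0_def bl_neg[OF C] CB)
  have MB: "B (M y) = M (B y)" for y
    by (rule commM[OF blB]) (simp add: T0_def bl_neg[OF blB])
  have denseM: "closure (range M) = UNIV"
    by (rule dense_range_selfadj[OF blM saM injM])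
  have subM: "subspace (range M)"
    by (rule linear_subspace_image[OF bounded_linear.linear[OF blM] subspace_UNIV])
  define f where "f y = B (SOME x. M x = y)" for y
  have fM: "f (M x) = B x" for x
  proof -
    have "M (SOME x'. M x' = M x) = M x" by (rule someI) (rule refl)
    then have "M ((SOME x'. M x' = M x) - x) = 0" by (simp add: bl_diff[OF blM])
    then have "(SOME x'. M x' = M x) - x = 0" by (rule injM)
    then have "(SOME x'. M x' = M x) = x" by simp
    then show ?thesis by (simp add: f_def)
  qed
  obtain J where blJ: "bounded_linear J" and JM0: "\<And>y. y \<in> range M \<Longrightarrow> J y = f y"
    and nJ: "\<And>y. norm (J y) \<le> 1 * norm y"
  proof (rule bl_extend[OF subM denseM, of f 1])
    show "f (x + y) = f x + f y" if xy: "x \<in> range M" "y \<in> range M" for x y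
    proof -
      obtain a b where "x = M a" "y = M b" using xy by blast
      then show ?thesis by (simp add: bl_add[OF blM, symmetric] fM bl_add[OF blB])
    qed
    show "f (c *\<^sub>R x) = c *\<^sub>R f x" if xr: "x \<in> range M" for x c
    proof -
      obtain a where "x = M a" using xr by blast
      then show ?thesis by (simp add: bl_scale[OF blM, symmetric] fM bl_scale[OF blB])
    qed
    show "norm (f x) \<le> 1 * norm x" if xr: "x \<in> range M" for x
    proof -
      obtain a where "x = M a" using xr by blast
      then show ?thesis by (simp add: fM normM)
    qed
  qed (auto)
  have JM: "J (M x) = B x" for x using JM0[of "M x"] fM by simp
  have cJ: "continuous_on UNIV J" by (rule bl_cont[OF blJ])
  have cM: "continuous_on UNIV M" by (rule bl_cont[OF blM])
  have normJ: "norm (J y) = norm y" for y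
  proof (rule dense_eq[of "\<lambda>y. norm (J y)" "\<lambda>y. norm y", OF _ _ denseM])
    show "continuous_on UNIV (\<lambda>y. norm (J y))" by (intro continuous_intros cJ)
    show "continuous_on UNIV (\<lambda>y. norm y)" by (intro continuous_intros)
    fix z assume "z \<in> range M"
    then obtain a where "z = M a" by blast
    then show "norm (J z) = norm z" by (simp add: JM normM)
  qed
  have JMc: "J (M y) = M (J y)" for y
  proof (rule dense_eq[of "\<lambda>y. J (M y)" "\<lambda>y. M (J y)", OF _ _ denseM])
    show "continuous_on UNIV (\<lambda>y. J (M y))" by (intro continuous_on_compose2[OF cJ cM]) auto
    show "continuous_on UNIV (\<lambda>y. M (J y))" by (intro continuous_on_compose2[OF cM cJ]) auto
    fix z assume "z \<in> range M"
    then obtain a where "z = M a" by blast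
    then show "J (M z) = M (J z)" by (simp add: JM MB)
  qed
  have blMM: "bounded_linear (\<lambda>x. M (M x))" by (rule bounded_linear_compose[OF blM blM])
  have saMM: "selfadj (\<lambda>x. M (M x))" using saM by (simp add: selfadj_def)
  have denseMM: "closure (range (\<lambda>x. M (M x))) = UNIV"
    by (rule dense_range_selfadj[OF blMM saMM]) (use injM in blast)
  have JJ: "J (J y) = - y" for y
  proof (rule dense_eq[of "\<lambda>y. J (J y)" "\<lambda>y. - y", OF _ _ denseMM])
    show "continuous_on UNIV (\<lambda>y. J (J y))" by (intro continuous_on_compose2[OF cJ cJ]) auto
    show "continuous_on UNIV (\<lambda>y::'a. - y)" by (rule bl_cont) (rule bounded_linear_minus[OF bounded_linear_ident])
    fix z assume "z \<in> range (\<lambda>x. M (M x))"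
    then obtain a where "z = M (M a)" by blast
    have "J (J (M (M a))) = J (B (M a))" by (simp only: JM)
    also have "\<dots> = J (M (B a))" by (simp only: MB)
    also have "\<dots> = B (B a)" by (simp only: JM)
    also have "\<dots> = - M (M a)" by (simp add: MM T0_def)
    finally show "J (J z) = - z" using \<open>z = M (M a)\<close> by simp
  qed
  have ortho: "inner (J x) (J y) = inner x y" for x y
  proof -
    have e: "norm (u + v)^2 = norm u ^2 + 2 * inner u v + norm v ^2" for u v :: 'a
      by (simp add: power2_norm_eq_inner inner_add_left inner_add_right inner_commute)
    have "2 * inner (J x) (J y) = norm (J x + J y)^2 - norm (J x)^2 - norm (J y)^2"
      using e[of "J x" "J y"] by simp
    also have "\<dots> = norm (x + y)^2 - norm x ^2 - norm y ^2"
      by (simp add: bl_add[OF blJ, symmetric] normJ)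
    also have "\<dots> = 2 * inner x y" using e[of x y] by simp
    finally show ?thesis by simp
  qed
  have commJ: "C (J y) = J (C y)" if C: "bounded_linear C" and CB: "\<And>y. C (B y) = B (C y)" for C y
  proof -
    have CM: "C (M y) = M (C y)" for y by (rule commM[OF C commT0[OF C CB]])
    have cC: "continuous_on UNIV C" by (rule bl_cont[OF C])
    show ?thesis
    proof (rule dense_eq[of "\<lambda>y. C (J y)" "\<lambda>y. J (C y)", OF _ _ denseM])
      show "continuous_on UNIV (\<lambda>y. C (J y))" by (intro continuous_on_compose2[OF cC cJ]) auto
      show "continuous_on UNIV (\<lambda>y. J (C y))" by (intro continuous_on_compose2[OF cJ cC]) auto
      fix z assume "z \<in> range M"
      then obtain a where "z = M a" by blast
      then show "C (J z) = J (C z)" by (simp add: JM CM CB)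
    qed
  qed
  have commM': "C (M y) = M (C y)" if C: "bounded_linear C" and CB: "\<And>y. C (B y) = B (C y)" for C y
    by (rule commM[OF C commT0[OF C CB]])
  show ?thesis
    using that[OF blJ blM saM posM injM JM JJ ortho commJ commM'] by blast
qed


lemma subspace_closure_gen:
  fixes S :: "'a::real_normed_vector set"
  assumes S: "subspace S"
  shows "subspace (closure S)"
  unfolding subspace_def
proof (intro conjI ballI allI)
  show "0 \<in> closure S" using S closure_subset subspace_0 by blast
next
  fix a b assume a: "a \<in> closure S" and b: "b \<in> closure S"
  obtain sa where sa: "\<And>n. sa n \<in> S" "sa \<longlonglongrightarrow> a" using a closure_sequential by blast
  obtain sb where sb: "\<And>n. sb n \<in> S" "sb \<longlonglongrightarrow> b" using b closure_sequential by blast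
  have "(\<lambda>n. sa n + sb n) \<longlonglongrightarrow> a + b" by (intro tendsto_intros sa sb)
  moreover have "\<And>n. sa n + sb n \<in> S" using S sa sb by (simp add: subspace_add)
  ultimately show "a + b \<in> closure S"
    unfolding closure_sequential by (intro exI[of _ "\<lambda>n. sa n + sb n"]) auto
next
  fix c :: real and a assume a: "a \<in> closure S"
  obtain sa where sa: "\<And>n. sa n \<in> S" "sa \<longlonglongrightarrow> a" using a closure_sequential by blast
  have "(\<lambda>n. c *\<^sub>R sa n) \<longlonglongrightarrow> c *\<^sub>R a" by (intro tendsto_intros sa)
  moreover have "\<And>n. c *\<^sub>R sa n \<in> S" using S sa by (simp add: subspace_scale)
  ultimately show "c *\<^sub>R a \<in> closure S"
    unfolding closure_sequential by (intro exI[of _ "\<lambda>n. c *\<^sub>R sa n"]) auto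
qed

lemma closed_contains_closure:
  assumes "closed T" "S \<subseteq> T" "x \<in> closure S" shows "x \<in> T"
  using closure_minimal[OF assms(2,1)] assms(3) by blast

lemma vinner_deriv:
  assumes "(f has_vector_derivative f') F"
  shows "((\<lambda>h. inner (f h) w) has_real_derivative inner f' w) F"
  using bounded_linear.has_vector_derivative[OF bounded_linear_inner_left assms]
  by (simp add: has_real_derivative_iff_has_vector_derivative)

lemma ode_zero:
  fixes f :: "real \<Rightarrow> real"
  assumes d: "\<And>t. (f has_real_derivative (c * f t)) (at t)" and c: "c \<noteq> 0"
    and b: "\<And>t. \<bar>f t\<bar> \<le> K"
  shows "f 0 = 0"
proof (rule ccontr)
  assume f0: "f 0 \<noteq> 0"
  define g where "g t = exp (- c * t) * f t" for t
  have "(g has_real_derivative 0) (at t)" for t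
  proof -
    have e: "((\<lambda>t. exp (- c * t)) has_real_derivative exp (- c * t) * (- c)) (at t)"
      by (auto intro!: derivative_eq_intros)
    have "(g has_real_derivative (exp (- c * t) * (- c) * f t + c * f t * exp (- c * t))) (at t)"
      unfolding g_def by (rule DERIV_mult[OF e d])
    then show ?thesis by (simp add: algebra_simps)
  qed
  then have gc: "g t = g 0" for t using DERIV_isconst_all by blast
  have ft: "f t = exp (c * t) * f 0" for t
  proof -
    have "exp (- c * t) * f t = f 0" using gc[of t] by (simp add: g_def)
    then have "exp (c * t) * (exp (- c * t) * f t) = exp (c * t) * f 0" by simp
    moreover have "exp (c * t) * exp (- c * t) = 1" by (simp add: exp_add[symmetric])
    ultimately show ?thesis by (metis mult.assoc mult_1)
  qed
  define t where "t = ln ((\<bar>K\<bar> + 1) / \<bar>f 0\<bar>) / c"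
  have "c * t = ln ((\<bar>K\<bar> + 1) / \<bar>f 0\<bar>)" using c by (simp add: t_def)
  then have "exp (c * t) = (\<bar>K\<bar> + 1) / \<bar>f 0\<bar>"
    using f0 by simp
  then have "\<bar>f t\<bar> = \<bar>K\<bar> + 1" using f0 ft[of t] by (simp add: abs_mult)
  then show False using b[of t] by simp
qed

locale setting =
  fixes V :: "'a::{real_inner, complete_space} set"
    and D :: "'a \<Rightarrow> 'a"
    and \<gamma> :: "real \<Rightarrow> 'a \<Rightarrow> 'a"
  assumes V_subspace: "subspace V"
    and V_dense: "closure V = UNIV"
    and D_maps: "\<forall>v\<in>V. D v \<in> V"
    and D_add: "\<forall>v\<in>V. \<forall>w\<in>V. D (v + w) = D v + D w"
    and D_scale: "\<forall>v\<in>V. \<forall>c::real. D (c *\<^sub>R v) = c *\<^sub>R D v"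
    and D_skew: "\<forall>v\<in>V. \<forall>w\<in>V. inner (D v) w = - inner v (D w)"
    and \<gamma>_maps: "\<forall>t. \<forall>v\<in>V. \<gamma> t v \<in> V"
    and \<gamma>_add: "\<forall>t. \<forall>v\<in>V. \<forall>w\<in>V. \<gamma> t (v + w) = \<gamma> t v + \<gamma> t w"
    and \<gamma>_scale: "\<forall>t. \<forall>v\<in>V. \<forall>c::real. \<gamma> t (c *\<^sub>R v) = c *\<^sub>R \<gamma> t v"
    and \<gamma>_orth: "\<forall>t. \<forall>v\<in>V. \<forall>w\<in>V. inner (\<gamma> t v) (\<gamma> t w) = inner v w"
    and \<gamma>_zero: "\<forall>v\<in>V. \<gamma> 0 v = v"
    and \<gamma>_group: "\<forall>s t. \<forall>v\<in>V. \<gamma> (s + t) v = \<gamma> s (\<gamma> t v)"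
    and \<gamma>_cont: "\<forall>v\<in>V. continuous_on UNIV (\<lambda>t. \<gamma> t v)"
    and \<gamma>_gen: "\<forall>v\<in>V. ((\<lambda>t. \<gamma> t v) has_vector_derivative D v) (at 0)"
    and DV_dense: "closure (D ` V) = UNIV"
begin

abbreviation "\<Gamma> \<equiv> closed_graph V D"
abbreviation "Dom \<equiv> closure_dom V D"
abbreviation "A \<equiv> closure_op V D"

lemma V0: "0 \<in> V" using V_subspace subspace_0 by blast

lemma graph_sub: "subspace (op_graph V D)"
  unfolding subspace_def op_graph_def
proof (intro conjI ballI allI)
  have "D 0 = 0" using D_scale V0 by (metis scaleR_zero_left)
  then show "(0::'a\<times>'a) \<in> (\<lambda>v. (v, D v)) ` V" using V0 by (auto simp: zero_prod_def intro!: image_eqI[of _ _ 0])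
next
  fix p q assume "p \<in> (\<lambda>v. (v, D v)) ` V" "q \<in> (\<lambda>v. (v, D v)) ` V"
  then obtain v w where "v \<in> V" "w \<in> V" "p = (v, D v)" "q = (w, D w)" by blast
  then show "p + q \<in> (\<lambda>v. (v, D v)) ` V"
    using D_add V_subspace by (auto intro!: image_eqI[of _ _ "v + w"] simp: subspace_add)
next
  fix c :: real and p assume "p \<in> (\<lambda>v. (v, D v)) ` V"
  then obtain v where "v \<in> V" "p = (v, D v)" by blast
  then show "c *\<^sub>R p \<in> (\<lambda>v. (v, D v)) ` V"
    using D_scale V_subspace by (auto intro!: image_eqI[of _ _ "c *\<^sub>R v"] simp: subspace_scale)
qed

lemma Gamma_sub: "subspace \<Gamma>"
  unfolding closed_graph_def by (rule subspace_closure_gen[OF graph_sub])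

lemma Gamma_closed: "closed \<Gamma>"
  unfolding closed_graph_def by simp

lemma graph_in_Gamma: "v \<in> V \<Longrightarrow> (v, D v) \<in> \<Gamma>"
proof -
  assume v: "v \<in> V"
  have "(v, D v) \<in> op_graph V D" unfolding op_graph_def using v by (rule imageI)
  then show ?thesis unfolding closed_graph_def using closure_subset[of "op_graph V D"] by (rule subsetD[rotated])
qed

lemma Gamma_perp: "(x, y) \<in> \<Gamma> \<Longrightarrow> w \<in> V \<Longrightarrow> inner y w + inner x (D w) = 0"
proof -
  assume xy: "(x, y) \<in> \<Gamma>" and w: "w \<in> V"
  let ?T = "{p::'a\<times>'a. inner (snd p) w + inner (fst p) (D w) = 0}"
  have "closed ?T"
    by (auto intro!: closed_Collect_eq continuous_intros)
  moreover have "op_graph V D \<subseteq> ?T"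
  proof
    fix p assume "p \<in> op_graph V D"
    then obtain v where v: "v \<in> V" "p = (v, D v)" unfolding op_graph_def by blast
    show "p \<in> ?T" using D_skew[rule_format, OF v(1) w] v(2) by simp
  qed
  ultimately show ?thesis
    using closed_contains_closure[of ?T "op_graph V D" "(x,y)"] xy by (simp add: closed_graph_def)
qed

lemma Gamma_zero: "(0, y) \<in> \<Gamma> \<Longrightarrow> y = 0"
proof -
  assume "(0, y) \<in> \<Gamma>"
  then have yw: "inner y w = 0" if "w \<in> V" for w using Gamma_perp that by fastforce
  have "closed {w. inner y w = 0}" by (auto intro!: closed_Collect_eq continuous_intros)
  then have "y \<in> {w. inner y w = 0}"
    using closed_contains_closure[of "{w. inner y w = 0}" V y] yw V_dense by auto
  then show ?thesis by simp
qed

lemma Gamma_unique: "(x, y) \<in> \<Gamma> \<Longrightarrow> (x, y') \<in> \<Gamma> \<Longrightarrow> y = y'"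
proof -
  assume a: "(x, y) \<in> \<Gamma>" "(x, y') \<in> \<Gamma>"
  have "(x, y) - (x, y') \<in> \<Gamma>" using Gamma_sub a by (rule subspace_diff)
  then have "(0, y - y') \<in> \<Gamma>" by simp
  then have "y - y' = 0" by (rule Gamma_zero)
  then show ?thesis by simp
qed

lemma A_graph: "x \<in> Dom \<Longrightarrow> (x, A x) \<in> \<Gamma>"
proof -
  assume "x \<in> Dom"
  then obtain y where y: "(x, y) \<in> \<Gamma>" unfolding closure_dom_def by blast
  have "A x = y" unfolding closure_op_def
  proof (rule the_equality)
    show "(x, y) \<in> \<Gamma>" by (rule y)
    fix z assume "(x, z) \<in> \<Gamma>"
    then show "z = y" using y by (rule Gamma_unique)
  qed
  then show ?thesis using y by simp
qed

lemma A_eq: "(x, y) \<in> \<Gamma> \<Longrightarrow> x \<in> Dom \<and> A x = y"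
proof
  assume a: "(x, y) \<in> \<Gamma>"
  then show x: "x \<in> Dom" unfolding closure_dom_def by (intro CollectI exI)
  show "A x = y" by (rule Gamma_unique[OF A_graph[OF x] a])
qed

lemma V_dom: "v \<in> V \<Longrightarrow> v \<in> Dom \<and> A v = D v"
  by (rule A_eq[OF graph_in_Gamma])

lemma dom_add: "x \<in> Dom \<Longrightarrow> y \<in> Dom \<Longrightarrow> x + y \<in> Dom \<and> A (x + y) = A x + A y"
proof -
  assume "x \<in> Dom" "y \<in> Dom"
  then have "(x, A x) + (y, A y) \<in> \<Gamma>" by (intro subspace_add[OF Gamma_sub] A_graph)
  then show ?thesis using A_eq by simp
qed

lemma dom_scale: "x \<in> Dom \<Longrightarrow> c *\<^sub>R x \<in> Dom \<and> A (c *\<^sub>R x) = c *\<^sub>R A x"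
proof -
  assume "x \<in> Dom"
  then have "c *\<^sub>R (x, A x) \<in> \<Gamma>" by (intro subspace_scale[OF Gamma_sub] A_graph)
  then show ?thesis using A_eq by simp
qed

lemma dom_diff: "x \<in> Dom \<Longrightarrow> y \<in> Dom \<Longrightarrow> x - y \<in> Dom \<and> A (x - y) = A x - A y"
  using dom_add[of x "(-1) *\<^sub>R y"] dom_scale[of y "-1"] by simp

lemma dom_neg: "x \<in> Dom \<Longrightarrow> - x \<in> Dom \<and> A (- x) = - A x"
  using dom_scale[of x "-1"] by simp

lemma dom0: "0 \<in> Dom \<and> A 0 = 0"
proof -
  have "(0::'a\<times>'a) \<in> \<Gamma>" by (rule subspace_0[OF Gamma_sub])
  then have "(0::'a, 0::'a) \<in> \<Gamma>" by (simp add: zero_prod_def)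
  then show ?thesis by (rule A_eq)
qed

lemma dom_sub: "subspace Dom"
  unfolding subspace_def
proof (intro conjI ballI allI)
  show "0 \<in> Dom" using dom0 by simp
  fix x y assume "x \<in> Dom" "y \<in> Dom"
  then show "x + y \<in> Dom" using dom_add by simp
next
  fix c :: real and x assume "x \<in> Dom"
  then show "c *\<^sub>R x \<in> Dom" using dom_scale by simp
qed

lemma A_skew: "x \<in> Dom \<Longrightarrow> y \<in> Dom \<Longrightarrow> inner (A x) y = - inner x (A y)"
proof -
  assume x: "x \<in> Dom" and y: "y \<in> Dom"
  let ?T = "{p::'a\<times>'a. inner (A x) (fst p) + inner x (snd p) = 0}"
  have "closed ?T"
    by (auto intro!: closed_Collect_eq continuous_intros)
  moreover have "op_graph V D \<subseteq> ?T"
  proof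
    fix p assume "p \<in> op_graph V D"
    then obtain v where v: "v \<in> V" "p = (v, D v)" unfolding op_graph_def by blast
    show "p \<in> ?T" using Gamma_perp[OF A_graph[OF x] v(1)] v(2) by simp
  qed
  ultimately have "(y, A y) \<in> ?T"
    using closed_contains_closure[of ?T "op_graph V D" "(y, A y)"] A_graph[OF y]
    by (simp add: closed_graph_def)
  then show ?thesis by simp
qed

lemma A_inj: "x \<in> Dom \<Longrightarrow> A x = 0 \<Longrightarrow> x = 0"
proof -
  assume x: "x \<in> Dom" and Ax: "A x = 0"
  have xw: "inner x w = 0" if wD: "w \<in> D ` V" for w
  proof -
    obtain v where v: "v \<in> V" "w = D v" using wD by blast
    have "inner (A v) x = - inner v (A x)" using A_skew V_dom[OF v(1)] x by blast
    then show ?thesis using v V_dom Ax by (simp add: inner_commute)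
  qed
  have "closed {w. inner x w = 0}" by (auto intro!: closed_Collect_eq continuous_intros)
  then have "x \<in> {w. inner x w = 0}"
    using closed_contains_closure[of "{w. inner x w = 0}" "D ` V" x] xw DV_dense by auto
  then show ?thesis by simp
qed

end


context setting
begin

lemma inner_A_self: "x \<in> Dom \<Longrightarrow> inner x (A x) = 0"
proof -
  assume x: "x \<in> Dom"
  have e: "inner (A x) x = - inner x (A x)" by (rule A_skew[OF x x])
  have "inner (A x) x = inner x (A x)" by (rule inner_commute)
  with e show ?thesis by simp
qed

lemma inner_A_self': "x \<in> Dom \<Longrightarrow> inner (A x) x = 0"
  using inner_A_self[of x] by (simp only: inner_commute)

lemma L_norm:
  assumes x: "x \<in> Dom" and s: "s = 1 \<or> s = -1"
  shows "norm x \<le> norm (x + s *\<^sub>R A x)"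
proof -
  have ss: "s * s = 1" using s by auto
  have "inner (x + s *\<^sub>R A x) (x + s *\<^sub>R A x) = inner x x + s * (s * inner (A x) (A x))"
    using inner_A_self[OF x] inner_A_self'[OF x] by (simp add: inner_add_left inner_add_right)
  also have "s * (s * inner (A x) (A x)) = inner (A x) (A x)"
    using ss by (simp only: mult.assoc[symmetric])
  finally have "inner x x \<le> inner (x + s *\<^sub>R A x) (x + s *\<^sub>R A x)" by simp
  then have "norm x ^2 \<le> norm (x + s *\<^sub>R A x)^2" by (simp only: power2_norm_eq_inner)
  then show ?thesis by (rule power2_le_imp_le) simp
qed

definition Ran :: "real \<Rightarrow> 'a set" where "Ran s = (\<lambda>x. x + s *\<^sub>R A x) ` Dom"

lemma L_diff: "x \<in> Dom \<Longrightarrow> y \<in> Dom \<Longrightarrow>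
   (x + s *\<^sub>R A x) - (y + s *\<^sub>R A y) = (x - y) + s *\<^sub>R A (x - y)"
proof -
  assume x: "x \<in> Dom" and y: "y \<in> Dom"
  have e: "A (x - y) = A x - A y" using dom_diff[OF x y] by blast
  show ?thesis by (simp add: e scaleR_diff_right algebra_simps)
qed

lemma Ran_closed:
  assumes s: "s = 1 \<or> s = -1"
  shows "closed (Ran s)"
proof (rule closed_sequential_limits[THEN iffD2], intro allI impI)
  have ss: "s * s = 1" using s by auto
  fix yy y assume "(\<forall>n. yy n \<in> Ran s) \<and> yy \<longlonglongrightarrow> y"
  then have yR: "\<And>n. yy n \<in> Ran s" and yl: "yy \<longlonglongrightarrow> y" by auto
  have "\<forall>n. \<exists>x. x \<in> Dom \<and> yy n = x + s *\<^sub>R A x"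
  proof
    fix n
    obtain x where "x \<in> Dom" "yy n = x + s *\<^sub>R A x" using yR[of n] unfolding Ran_def by (rule imageE)
    then show "\<exists>x. x \<in> Dom \<and> yy n = x + s *\<^sub>R A x" by (intro exI conjI)
  qed
  from choice[OF this] obtain xx where xx: "\<forall>n. xx n \<in> Dom \<and> yy n = xx n + s *\<^sub>R A (xx n)"
    by (elim exE)
  then have xD: "\<And>n. xx n \<in> Dom" and xy: "\<And>n. yy n = xx n + s *\<^sub>R A (xx n)" by auto
  have "Cauchy yy" using yl by (rule LIMSEQ_imp_Cauchy)
  have "Cauchy xx"
  proof (rule metric_CauchyI)
    fix e :: real assume e: "0 < e"
    from metric_CauchyD[OF \<open>Cauchy yy\<close> e] obtain M
      where M: "\<forall>m\<ge>M. \<forall>n\<ge>M. dist (yy m) (yy n) < e" by (elim exE)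
    show "\<exists>M. \<forall>m\<ge>M. \<forall>n\<ge>M. dist (xx m) (xx n) < e"
    proof (intro exI allI impI)
      fix m n assume mn: "M \<le> m" "M \<le> n"
      have "dist (xx m) (xx n) = norm (xx m - xx n)" by (simp add: dist_norm)
      also have "\<dots> \<le> norm ((xx m - xx n) + s *\<^sub>R A (xx m - xx n))"
        by (rule L_norm[OF conjunct1[OF dom_diff[OF xD[of m] xD[of n]]] s])
      also have "\<dots> = norm (yy m - yy n)" by (simp only: xy[of m] xy[of n] L_diff[OF xD[of m] xD[of n], of s])
      also have "\<dots> < e" using M mn by (simp add: dist_norm)
      finally show "dist (xx m) (xx n) < e" .
    qed
  qed
  from Cauchy_convergent[OF this] obtain x where xl: "xx \<longlonglongrightarrow> x"
    unfolding convergent_def by (elim exE)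
  have Ax: "A (xx n) = s *\<^sub>R (yy n - xx n)" for n
  proof -
    have "s *\<^sub>R (yy n - xx n) = (s * s) *\<^sub>R A (xx n)" by (simp add: xy[of n])
    then show ?thesis using ss by simp
  qed
  have lim: "(\<lambda>n. (xx n, A (xx n))) \<longlonglongrightarrow> (x, s *\<^sub>R (y - x))"
    unfolding Ax by (intro tendsto_Pair tendsto_intros xl yl)
  have inG: "\<And>n. (xx n, A (xx n)) \<in> \<Gamma>" by (rule A_graph[OF xD])
  have "(x, s *\<^sub>R (y - x)) \<in> \<Gamma>"
    using closed_sequentially[OF Gamma_closed inG lim] .
  then have xd: "x \<in> Dom" and Axe: "A x = s *\<^sub>R (y - x)" using A_eq by auto
  have "x + s *\<^sub>R A x = x + (s * s) *\<^sub>R (y - x)" by (simp add: Axe)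
  then have "y = x + s *\<^sub>R A x" using ss by simp
  then show "y \<in> Ran s" unfolding Ran_def using xd by (rule image_eqI)
qed

lemma Ran_sub: "subspace (Ran s)"
  unfolding subspace_def Ran_def
proof (intro conjI ballI allI)
  show "0 \<in> (\<lambda>x. x + s *\<^sub>R A x) ` Dom" using dom0 by (auto intro!: image_eqI[of _ _ 0])
next
  fix p q assume "p \<in> (\<lambda>x. x + s *\<^sub>R A x) ` Dom" "q \<in> (\<lambda>x. x + s *\<^sub>R A x) ` Dom"
  then obtain x y where "x \<in> Dom" "y \<in> Dom" "p = x + s *\<^sub>R A x" "q = y + s *\<^sub>R A y" by blast
  then show "p + q \<in> (\<lambda>x. x + s *\<^sub>R A x) ` Dom"
    using dom_add[of x y] by (intro image_eqI[of _ _ "x + y"]) (auto simp: algebra_simps)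
next
  fix c :: real and p assume "p \<in> (\<lambda>x. x + s *\<^sub>R A x) ` Dom"
  then obtain x where "x \<in> Dom" "p = x + s *\<^sub>R A x" by blast
  then show "c *\<^sub>R p \<in> (\<lambda>x. x + s *\<^sub>R A x) ` Dom"
    using dom_scale[of x c] by (intro image_eqI[of _ _ "c *\<^sub>R x"]) (auto simp: algebra_simps)
qed

lemma gamma_deriv:
  assumes v: "v \<in> V"
  shows "((\<lambda>t. inner (\<gamma> t v) w) has_real_derivative inner (D (\<gamma> t v)) w) (at t)"
proof -
  have u: "\<gamma> t v \<in> V" using \<gamma>_maps v by blast
  have "((\<lambda>h. inner (\<gamma> h (\<gamma> t v)) w) has_real_derivative inner (D (\<gamma> t v)) w) (at 0)"
    by (rule vinner_deriv) (use \<gamma>_gen u in blast)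
  moreover have "\<gamma> h (\<gamma> t v) = \<gamma> (h + t) v" for h by (simp add: \<gamma>_group[rule_format, OF v])
  ultimately have "((\<lambda>h. inner (\<gamma> (h + t) v) w) has_real_derivative inner (D (\<gamma> t v)) w) (at 0)"
    by simp
  then show ?thesis using DERIV_shift[of "\<lambda>t. inner (\<gamma> t v) w" _ 0 t] by simp
qed

lemma gamma_norm: "v \<in> V \<Longrightarrow> norm (\<gamma> t v) = norm v"
  using \<gamma>_orth by (simp add: norm_eq_sqrt_inner)

lemma Ran_perp:
  assumes s: "s = 1 \<or> s = -1" and w: "\<And>z. z \<in> Ran s \<Longrightarrow> inner w z = 0"
  shows "w = 0"
proof -
  have ss: "s * s = 1" using s by auto
  have wv: "inner v w = 0" if v: "v \<in> V" for v
  proof -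
    define f where "f t = inner (\<gamma> t v) w" for t
    have fd: "(f has_real_derivative ((- s) * f t)) (at t)" for t
    proof -
      have u: "\<gamma> t v \<in> V" using \<gamma>_maps v by blast
      have "\<gamma> t v + s *\<^sub>R A (\<gamma> t v) \<in> Ran s" unfolding Ran_def using V_dom[OF u] by blast
      then have "inner w (\<gamma> t v + s *\<^sub>R A (\<gamma> t v)) = 0" by (rule w)
      then have "inner (\<gamma> t v) w + s * inner (D (\<gamma> t v)) w = 0"
        using V_dom[OF u] by (simp add: inner_add_right inner_commute)
      then have "s * (inner (\<gamma> t v) w + s * inner (D (\<gamma> t v)) w) = 0" by simp
      then have "s * inner (\<gamma> t v) w + (s * s) * inner (D (\<gamma> t v)) w = 0"
        by (simp only: distrib_left mult.assoc)
      then have "inner (D (\<gamma> t v)) w = - (s * inner (\<gamma> t v) w)" using ss by simp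
      then have "inner (D (\<gamma> t v)) w = (- s) * f t" by (simp add: f_def)
      then show ?thesis using gamma_deriv[OF v, of w t] unfolding f_def by simp
    qed
    have fb: "\<bar>f t\<bar> \<le> norm v * norm w" for t
      using Cauchy_Schwarz_ineq2[of "\<gamma> t v" w] gamma_norm[OF v] by (simp add: f_def)
    have "f 0 = 0" by (rule ode_zero[OF fd _ fb]) (use s in auto)
    then show ?thesis using \<gamma>_zero v by (simp add: f_def)
  qed
  have "closed {z. inner z w = 0}" by (auto intro!: closed_Collect_eq continuous_intros)
  then have "w \<in> {z. inner z w = 0}"
    using closed_contains_closure[of "{z. inner z w = 0}" V w] wv V_dense by auto
  then show ?thesis by simp
qed

lemma Ran_UNIV:
  assumes s: "s = 1 \<or> s = -1"
  shows "Ran s = UNIV"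
proof -
  have "closure (Ran s) = UNIV"
  proof (rule ortho_dense[OF Ran_sub])
    fix w assume "\<And>m. m \<in> Ran s \<Longrightarrow> inner w m = 0"
    then show "w = 0" by (rule Ran_perp[OF s])
  qed
  then show ?thesis using Ran_closed[OF s] by (simp add: closure_closed)
qed

definition Res :: "real \<Rightarrow> 'a \<Rightarrow> 'a" where
  "Res s y = (SOME x. x \<in> Dom \<and> x + s *\<^sub>R A x = y)"

lemma Res_spec:
  assumes s: "s = 1 \<or> s = -1"
  shows "Res s y \<in> Dom \<and> Res s y + s *\<^sub>R A (Res s y) = y"
proof -
  have "y \<in> Ran s" using Ran_UNIV[OF s] by simp
  then have "\<exists>x. x \<in> Dom \<and> x + s *\<^sub>R A x = y" unfolding Ran_def by blast
  then show ?thesis unfolding Res_def by (rule someI_ex)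
qed

lemma L_inj:
  assumes s: "s = 1 \<or> s = -1" and x: "x \<in> Dom" and y: "y \<in> Dom"
    and e: "x + s *\<^sub>R A x = y + s *\<^sub>R A y"
  shows "x = y"
proof -
  have "norm (x - y) \<le> norm ((x - y) + s *\<^sub>R A (x - y))"
    by (rule L_norm[OF conjunct1[OF dom_diff[OF x y]] s])
  also have "\<dots> = 0" using L_diff[OF x y, of s] e by simp
  finally show ?thesis by simp
qed

lemma Res_left:
  assumes s: "s = 1 \<or> s = -1" and x: "x \<in> Dom"
  shows "Res s (x + s *\<^sub>R A x) = x"
  using L_inj[OF s _ x] Res_spec[OF s, of "x + s *\<^sub>R A x"] by blast

lemma Res_bl:
  assumes s: "s = 1 \<or> s = -1"
  shows "bounded_linear (Res s)"
proof (rule bounded_linear_intro[where K=1])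
  fix y z
  have d: "Res s y \<in> Dom" "Res s z \<in> Dom" using Res_spec[OF s] by auto
  have "Res s y + Res s z + s *\<^sub>R A (Res s y + Res s z) = y + z"
    using dom_add[OF d] Res_spec[OF s, of y] Res_spec[OF s, of z] by (simp add: algebra_simps)
  then show "Res s (y + z) = Res s y + Res s z"
    using Res_left[OF s, of "Res s y + Res s z"] dom_add[OF d] by simp
next
  fix c y
  have d: "Res s y \<in> Dom" using Res_spec[OF s] by auto
  have r: "Res s y + s *\<^sub>R A (Res s y) = y" using Res_spec[OF s, of y] by blast
  have "c *\<^sub>R Res s y + s *\<^sub>R A (c *\<^sub>R Res s y) = c *\<^sub>R (Res s y + s *\<^sub>R A (Res s y))"
    using dom_scale[OF d, of c] by (simp add: algebra_simps)
  then have "c *\<^sub>R Res s y + s *\<^sub>R A (c *\<^sub>R Res s y) = c *\<^sub>R y" by (simp only: r)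
  then show "Res s (c *\<^sub>R y) = c *\<^sub>R Res s y"
    using Res_left[OF s, of "c *\<^sub>R Res s y"] dom_scale[OF d] by simp
next
  fix y
  show "norm (Res s y) \<le> norm y * 1"
    using L_norm[OF _ s, of "Res s y"] Res_spec[OF s, of y] by simp
qed

end


context setting
begin

definition R :: "'a \<Rightarrow> 'a" where "R = Res (-1)"
definition R' :: "'a \<Rightarrow> 'a" where "R' = Res 1"

lemma R_spec: "R y \<in> Dom \<and> R y - A (R y) = y"
  using Res_spec[of "-1" y] by (simp add: R_def)
lemma R'_spec: "R' y \<in> Dom \<and> R' y + A (R' y) = y"
  using Res_spec[of 1 y] by (simp add: R'_def)
lemma R_left: "x \<in> Dom \<Longrightarrow> R (x - A x) = x"
  using Res_left[of "-1" x] by (simp add: R_def)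
lemma R'_left: "x \<in> Dom \<Longrightarrow> R' (x + A x) = x"
  using Res_left[of 1 x] by (simp add: R'_def)
lemma R_bl: "bounded_linear R" unfolding R_def by (rule Res_bl) simp
lemma R'_bl: "bounded_linear R'" unfolding R'_def by (rule Res_bl) simp
lemma R_dom: "R y \<in> Dom" using R_spec by blast
lemma R'_dom: "R' y \<in> Dom" using R'_spec by blast
lemma AR: "A (R y) = R y - y" using R_spec[of y] by (simp add: algebra_simps)
lemma AR': "A (R' y) = y - R' y" using R'_spec[of y] by (simp add: algebra_simps)

lemma R_adj: "inner (R x) y = inner x (R' y)"
proof -
  define a where "a = R x"
  define b where "b = R' y"
  have a: "a \<in> Dom" "x = a - A a" using R_spec[of x] by (auto simp: a_def)
  have b: "b \<in> Dom" "y = b + A b" using R'_spec[of y] by (auto simp: b_def)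
  have sk: "inner (A a) b = - inner a (A b)" by (rule A_skew[OF a(1) b(1)])
  have "inner (R x) y = inner a b + inner a (A b)"
    unfolding a_def[symmetric] by (subst b(2)) (simp add: inner_add_right)
  also have "\<dots> = inner a b - inner (A a) b" using sk by simp
  also have "\<dots> = inner x (R' y)"
    unfolding b_def[symmetric] by (subst a(2)) (simp add: inner_diff_left)
  finally show ?thesis .
qed

lemma R'_adj: "inner (R' x) y = inner x (R y)"
  using R_adj[of y x] by (simp add: inner_commute)

lemma RR'1: "R y + R' y = 2 *\<^sub>R R' (R y)"
proof -
  have "R y = R' (R y + A (R y))" using R'_left[OF R_dom] by simp
  also have "R y + A (R y) = 2 *\<^sub>R R y - y" by (simp add: AR scaleR_2)
  also have "R' (2 *\<^sub>R R y - y) = 2 *\<^sub>R R' (R y) - R' y"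
    by (simp add: bl_diff[OF R'_bl] bl_scale[OF R'_bl])
  finally show ?thesis by (simp add: algebra_simps)
qed

lemma RR'2: "R y + R' y = 2 *\<^sub>R R (R' y)"
proof -
  have "R' y = R (R' y - A (R' y))" using R_left[OF R'_dom] by simp
  also have "R' y - A (R' y) = 2 *\<^sub>R R' y - y" by (simp add: AR' scaleR_2)
  also have "R (2 *\<^sub>R R' y - y) = 2 *\<^sub>R R (R' y) - R y"
    by (simp add: bl_diff[OF R_bl] bl_scale[OF R_bl])
  finally show ?thesis by (simp add: algebra_simps)
qed

lemma RR'_comm: "R (R' y) = R' (R y)"
  using RR'1[of y] RR'2[of y] by simp

definition B :: "'a \<Rightarrow> 'a" where "B y = (1/2) *\<^sub>R (R y - R' y)"

lemma B_bl: "bounded_linear B"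
  unfolding B_def[abs_def]
  by (intro bounded_linear_compose[OF bounded_linear_scaleR_right] bounded_linear_sub R_bl R'_bl)

lemma B_skew: "inner (B x) y = - inner x (B y)"
  by (simp add: B_def inner_diff_left inner_diff_right R_adj R'_adj field_simps)

lemma B_eq: "A (R (R' y)) = B y"
proof -
  have e: "R (R' y) = (1/2) *\<^sub>R (R y + R' y)" using RR'2[of y] by simp
  have "A (R (R' y)) = R (R' y) - R' y" by (rule AR)
  also have "\<dots> = (1/2) *\<^sub>R (R y + R' y) - R' y" by (simp only: e)
  also have "\<dots> = B y" by (simp add: B_def algebra_simps scaleR_add_left[symmetric])
  finally show ?thesis .
qed

lemma B_inj: "B y = 0 \<Longrightarrow> y = 0"
proof -
  assume "B y = 0"
  then have "A (R (R' y)) = 0" by (simp add: B_eq)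
  then have z: "R (R' y) = 0" by (rule A_inj[OF R_dom])
  have "R' y = R (R' y) - A (R (R' y))" using R_spec[of "R' y"] by simp
  then have "R' y = 0" using z dom0 by simp
  then show "y = 0" using R'_spec[of y] dom0 by simp
qed

lemma R_B: "R (B y) = B (R y)"
  by (simp add: B_def bl_diff[OF R_bl] bl_scale[OF R_bl] RR'_comm)
lemma R'_B: "R' (B y) = B (R' y)"
  by (simp add: B_def bl_diff[OF R'_bl] bl_scale[OF R'_bl] RR'_comm)

lemma R_surj_dom: "x \<in> Dom \<Longrightarrow> x = R (x - A x)"
  using R_left by simp

lemma gamma_ext_ex: "\<exists>g. bounded_linear g \<and> (\<forall>v\<in>V. g v = \<gamma> t v)"
proof -
  obtain g where "bounded_linear g" "\<And>v. v \<in> V \<Longrightarrow> g v = \<gamma> t v"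
  proof (rule bl_extend[OF V_subspace V_dense, of "\<gamma> t" 1])
    show "\<gamma> t (x + y) = \<gamma> t x + \<gamma> t y" if "x \<in> V" "y \<in> V" for x y using \<gamma>_add that by blast
    show "\<gamma> t (c *\<^sub>R x) = c *\<^sub>R \<gamma> t x" if "x \<in> V" for x c using \<gamma>_scale that by blast
    show "norm (\<gamma> t x) \<le> 1 * norm x" if "x \<in> V" for x using gamma_norm[OF that] by simp
  qed auto
  then show ?thesis by blast
qed

definition G :: "real \<Rightarrow> 'a \<Rightarrow> 'a" where
  "G t = (SOME g. bounded_linear g \<and> (\<forall>v\<in>V. g v = \<gamma> t v))"

lemma G_spec: "bounded_linear (G t) \<and> (\<forall>v\<in>V. G t v = \<gamma> t v)"
  unfolding G_def by (rule someI_ex[OF gamma_ext_ex])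

lemma G_bl: "bounded_linear (G t)" using G_spec by blast
lemma G_V: "v \<in> V \<Longrightarrow> G t v = \<gamma> t v" using G_spec by blast

lemma G_closure_op: "closure_op V (\<gamma> t) x = G t x"
proof -
  have cG: "continuous_on UNIV (G t)" by (rule bl_cont[OF G_bl])
  have in_cl: "(x, G t x) \<in> closed_graph V (\<gamma> t)"
  proof -
    have "x \<in> closure V" using V_dense by simp
    then obtain vv where vv: "\<And>n. vv n \<in> V" "vv \<longlonglongrightarrow> x" unfolding closure_sequential by blast
    have "(\<lambda>n. (vv n, G t (vv n))) \<longlonglongrightarrow> (x, G t x)"
      by (intro tendsto_Pair vv bounded_linear.tendsto[OF G_bl])
    moreover have "(vv n, G t (vv n)) \<in> op_graph V (\<gamma> t)" for n
      unfolding op_graph_def using vv(1)[of n] G_V[OF vv(1)[of n]] by (simp add: image_iff)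
    ultimately show ?thesis unfolding closed_graph_def closure_sequential
      by (intro exI[of _ "\<lambda>n. (vv n, G t (vv n))"]) auto
  qed
  have uniq: "y = G t x" if "(x, y) \<in> closed_graph V (\<gamma> t)" for y
  proof -
    let ?T = "{p::'a\<times>'a. snd p = G t (fst p)}"
    have "closed ?T"
      by (intro closed_Collect_eq continuous_intros continuous_on_compose2[OF cG]) auto
    moreover have "op_graph V (\<gamma> t) \<subseteq> ?T"
    proof
      fix p assume "p \<in> op_graph V (\<gamma> t)"
      then obtain v where v: "v \<in> V" "p = (v, \<gamma> t v)" unfolding op_graph_def by blast
      show "p \<in> ?T" using v G_V[OF v(1)] by simp
    qed
    ultimately have "(x, y) \<in> ?T"
      using closed_contains_closure[of ?T "op_graph V (\<gamma> t)" "(x,y)"] that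
      by (simp add: closed_graph_def)
    then show ?thesis by simp
  qed
  show ?thesis unfolding closure_op_def
    by (rule the_equality[where P="\<lambda>y. (x, y) \<in> closed_graph V (\<gamma> t)", OF in_cl]) (rule uniq)
qed

lemma D_gamma: "v \<in> V \<Longrightarrow> D (\<gamma> t v) = G t (D v)"
proof -
  assume v: "v \<in> V"
  have u: "\<gamma> t v \<in> V" using \<gamma>_maps v by blast
  have eqw: "inner (D (\<gamma> t v)) w = inner (G t (D v)) w" for w
  proof -
    have f1: "(\<lambda>h. inner (\<gamma> h (\<gamma> t v)) w) = (\<lambda>h. inner (\<gamma> (t + h) v) w)"
      by (rule ext) (simp add: \<gamma>_group[rule_format, OF v] add.commute)
    have f2: "(\<lambda>h. inner (G t (\<gamma> h v)) w) = (\<lambda>h. inner (\<gamma> (t + h) v) w)"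
    proof (rule ext)
      fix h
      have "\<gamma> h v \<in> V" using \<gamma>_maps v by blast
      then show "inner (G t (\<gamma> h v)) w = inner (\<gamma> (t + h) v) w"
        by (simp add: G_V \<gamma>_group[rule_format, OF v])
    qed
    have d1: "((\<lambda>h. inner (\<gamma> (t + h) v) w) has_real_derivative inner (D (\<gamma> t v)) w) (at 0)"
      unfolding f1[symmetric] by (rule vinner_deriv) (use \<gamma>_gen u in blast)
    have gv: "((\<lambda>h. \<gamma> h v) has_vector_derivative D v) (at 0)" using \<gamma>_gen v by blast
    have d2: "((\<lambda>h. inner (\<gamma> (t + h) v) w) has_real_derivative inner (G t (D v)) w) (at 0)"
      unfolding f2[symmetric]
      by (rule vinner_deriv[OF bounded_linear.has_vector_derivative[OF G_bl gv]])
    show ?thesis by (rule DERIV_unique[OF d1 d2])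
  qed
  have "inner (D (\<gamma> t v) - G t (D v)) (D (\<gamma> t v) - G t (D v)) = 0"
    by (simp add: inner_diff_left eqw)
  then show ?thesis by simp
qed

lemma G_A: "x \<in> Dom \<Longrightarrow> G t x \<in> Dom \<and> A (G t x) = G t (A x)"
proof -
  assume x: "x \<in> Dom"
  define \<Phi> where "\<Phi> = (\<lambda>p::'a\<times>'a. (G t (fst p), G t (snd p)))"
  have cG: "continuous_on UNIV (G t)" by (rule bl_cont[OF G_bl])
  have c\<Phi>: "continuous_on (closure (op_graph V D)) \<Phi>"
    unfolding \<Phi>_def
    by (intro continuous_intros continuous_on_compose2[OF cG]) auto
  have "\<Phi> ` op_graph V D \<subseteq> \<Gamma>"
  proof
    fix q assume "q \<in> \<Phi> ` op_graph V D"
    then obtain v where v: "v \<in> V" "q = (G t v, G t (D v))" unfolding op_graph_def \<Phi>_def by auto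
    have u: "\<gamma> t v \<in> V" using \<gamma>_maps v by blast
    have "q = (\<gamma> t v, D (\<gamma> t v))" using v G_V[OF v(1)] D_gamma[OF v(1)] by simp
    then show "q \<in> \<Gamma>" using graph_in_Gamma[OF u] by simp
  qed
  then have "\<Phi> ` closure (op_graph V D) \<subseteq> \<Gamma>"
    by (rule image_closure_subset[OF c\<Phi> Gamma_closed])
  moreover have "(x, A x) \<in> closure (op_graph V D)" using A_graph[OF x] by (simp add: closed_graph_def)
  ultimately have "\<Phi> (x, A x) \<in> \<Gamma>" by blast
  then show ?thesis unfolding \<Phi>_def by (intro A_eq) simp
qed

lemma G_R: "G t (R y) = R (G t y)"
proof -
  have d: "G t (R y) \<in> Dom" and e: "A (G t (R y)) = G t (A (R y))" using G_A[OF R_dom] by auto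
  have "G t (R y) - A (G t (R y)) = G t y"
    using R_spec[of y] by (simp add: e bl_diff[OF G_bl, symmetric])
  then show ?thesis using R_left[OF d] by simp
qed

lemma G_R': "G t (R' y) = R' (G t y)"
proof -
  have d: "G t (R' y) \<in> Dom" and e: "A (G t (R' y)) = G t (A (R' y))" using G_A[OF R'_dom] by auto
  have "G t (R' y) + A (G t (R' y)) = G t y"
    using R'_spec[of y] by (simp add: e bl_add[OF G_bl, symmetric])
  then show ?thesis using R'_left[OF d] by simp
qed

lemma G_B: "G t (B y) = B (G t y)"
  by (simp add: B_def bl_diff[OF G_bl] bl_scale[OF G_bl] G_R G_R')

end


context setting
begin

lemma smooth_facts: "v \<in> smooth_dom V D \<Longrightarrow> v \<in> Dom \<and> A v \<in> Dom"
proof -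
  assume v: "v \<in> smooth_dom V D"
  have "Suc (Suc 0) \<in> {1..}" by simp
  then have "v \<in> closure_pow_dom V D (Suc (Suc 0))" using v unfolding smooth_dom_def by blast
  then show ?thesis by simp
qed

lemma rep: "v \<in> Dom \<Longrightarrow> A v \<in> Dom \<Longrightarrow> v = R (R' (v - A (A v)))"
proof -
  assume v: "v \<in> Dom" and Av: "A v \<in> Dom"
  have d: "v - A v \<in> Dom" and e: "A (v - A v) = A v - A (A v)" using dom_diff[OF v Av] by auto
  have eq: "(v - A v) + A (v - A v) = v - A (A v)" by (simp add: e)
  have "R' (v - A (A v)) = v - A v" using R'_left[OF d] unfolding eq .
  then show ?thesis using R_left[OF v] by simp
qed

lemma main:
  "\<exists>I :: 'a \<Rightarrow> 'a.
     (\<forall>v\<in>smooth_dom V D. I v \<in> smooth_dom V D)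
   \<and> (\<forall>v\<in>smooth_dom V D. \<forall>w\<in>smooth_dom V D. I (v + w) = I v + I w)
   \<and> (\<forall>v\<in>smooth_dom V D. \<forall>c::real. I (c *\<^sub>R v) = c *\<^sub>R I v)
   \<and> (\<forall>v\<in>smooth_dom V D. I (I v) = - v)
   \<and> (\<forall>v\<in>smooth_dom V D. \<forall>w\<in>smooth_dom V D. inner (I v) (I w) = inner v w)
   \<and> (\<forall>t. \<forall>v\<in>smooth_dom V D.
        closure_op V (\<gamma> t) (I v) = I (closure_op V (\<gamma> t) v))
   \<and> (\<forall>v\<in>smooth_dom V D. \<forall>w\<in>smooth_dom V D.
        inner (closure_op V D (- I v)) w = inner (closure_op V D (- I w)) v)
   \<and> (\<forall>v\<in>smooth_dom V D. v \<noteq> 0 \<longrightarrow> inner (closure_op V D (- I v)) v > 0)"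
proof -
  obtain J M where blJ: "bounded_linear J" and blM: "bounded_linear M" and saM: "selfadj M"
    and posM: "posop M" and injM: "\<And>x. M x = 0 \<Longrightarrow> x = 0" and JM: "\<And>x. J (M x) = B x"
    and JJ: "\<And>x. J (J x) = - x" and Jo: "\<And>x y. inner (J x) (J y) = inner x y"
    and commJ: "\<And>C y. bounded_linear C \<Longrightarrow> (\<And>y. C (B y) = B (C y)) \<Longrightarrow> C (J y) = J (C y)"
    and commM: "\<And>C y. bounded_linear C \<Longrightarrow> (\<And>y. C (B y) = B (C y)) \<Longrightarrow> C (M y) = M (C y)"
    using polar[OF B_bl B_skew B_inj] by blast
  have RJ: "R (J y) = J (R y)" for y by (rule commJ[OF R_bl R_B])
  have R'M: "R' (M y) = M (R' y)" for y by (rule commM[OF R'_bl R'_B])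
  have GJ: "G t (J y) = J (G t y)" for t y by (rule commJ[OF G_bl G_B])
  have J_Dom: "J x \<in> Dom \<and> A (J x) = J (A x)" if x: "x \<in> Dom" for x
  proof -
    define z where "z = x - A x"
    have xz: "x = R z" unfolding z_def using R_left[OF x] by simp
    have "J x = R (J z)" using xz RJ by simp
    moreover have "A (R (J z)) = J (A x)"
    proof -
      have "A (R (J z)) = R (J z) - J z" by (rule AR)
      also have "\<dots> = J (R z - z)" using RJ[of z] by (simp add: bl_diff[OF blJ])
      also have "R z - z = A x" using xz AR[of z] by simp
      finally show ?thesis .
    qed
    ultimately show ?thesis using R_dom by simp
  qed
  have J_pow: "J x \<in> closure_pow_dom V D n" if "x \<in> closure_pow_dom V D n" for n x
    using that
  proof (induction n arbitrary: x)
    case 0 then show ?case by simp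
  next
    case (Suc n)
    then have x: "x \<in> Dom" and Ax: "A x \<in> closure_pow_dom V D n" by auto
    have "A (J x) \<in> closure_pow_dom V D n" using J_Dom[OF x] Suc.IH[OF Ax] by simp
    then show ?case using J_Dom[OF x] by simp
  qed
  have J_smooth: "J v \<in> smooth_dom V D" if "v \<in> smooth_dom V D" for v
    using that J_pow unfolding smooth_dom_def by blast
  have key: "closure_op V D (- J v) = M (v - A (A v)) \<and> v = R (R' (v - A (A v)))"
    if v: "v \<in> smooth_dom V D" for v
  proof -
    have vd: "v \<in> Dom" and Avd: "A v \<in> Dom" using smooth_facts[OF v] by auto
    define u where "u = v - A (A v)"
    have vu: "v = R (R' u)" unfolding u_def by (rule rep[OF vd Avd])
    have "A (- J v) = - A (J v)" using dom_neg[of "J v"] J_Dom[OF vd] by simp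
    also have "\<dots> = - J (A v)" using J_Dom[OF vd] by simp
    also have "A v = B u" by (subst vu) (rule B_eq)
    also have "- J (B u) = M u" using JJ[of "M u"] JM[of u] by simp
    finally have AJ: "A (- J v) = M u" .
    show ?thesis unfolding u_def[symmetric] using AJ vu by (intro conjI)
  qed
  have I7: "inner (closure_op V D (- J v)) w = inner (M (R' (v - A (A v)))) (R' (w - A (A w)))"
    if v: "v \<in> smooth_dom V D" and w: "w \<in> smooth_dom V D" for v w
  proof -
    have "inner (closure_op V D (- J v)) w = inner (M (v - A (A v))) (R (R' (w - A (A w))))"
      using key[OF v] key[OF w] by metis
    also have "\<dots> = inner (R' (M (v - A (A v)))) (R' (w - A (A w)))"
      by (simp add: R'_adj)
    also have "\<dots> = inner (M (R' (v - A (A v)))) (R' (w - A (A w)))" by (simp add: R'M)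
    finally show ?thesis .
  qed
  show ?thesis
  proof (intro exI[of _ J] conjI ballI allI impI)
    show "J v \<in> smooth_dom V D" if "v \<in> smooth_dom V D" for v using J_smooth that .
    show "J (v + w) = J v + J w" for v w by (rule bl_add[OF blJ])
    show "J (c *\<^sub>R v) = c *\<^sub>R J v" for c v by (rule bl_scale[OF blJ])
    show "J (J v) = - v" for v by (rule JJ)
    show "inner (J v) (J w) = inner v w" for v w by (rule Jo)
    show "closure_op V (\<gamma> t) (J v) = J (closure_op V (\<gamma> t) v)" for t v
      by (simp add: G_closure_op GJ)
  next
    fix v w assume v: "v \<in> smooth_dom V D" and w: "w \<in> smooth_dom V D"
    show "inner (closure_op V D (- J v)) w = inner (closure_op V D (- J w)) v"
      using I7[OF v w] I7[OF w v] saM by (simp add: selfadj_def inner_commute)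
  next
    fix v assume v: "v \<in> smooth_dom V D" and v0: "v \<noteq> 0"
    define u where "u = v - A (A v)"
    define a where "a = R' u"
    have "u \<noteq> 0"
    proof
      assume "u = 0"
      then have "v = R (R' 0)" using key[OF v] by (simp add: u_def)
      then show False using v0 by (simp add: bl_zero[OF R_bl] bl_zero[OF R'_bl])
    qed
    have "a \<noteq> 0"
    proof
      assume a0: "a = 0"
      have "u = R' u + A (R' u)" using R'_spec[of u] by simp
      then have "u = 0" using a0 dom0 by (simp add: a_def)
      then show False using \<open>u \<noteq> 0\<close> by simp
    qed
    have "inner (closure_op V D (- J v)) v = inner (M a) a"
      using I7[OF v v] by (simp add: a_def u_def)
    moreover have "0 < inner (M a) a"
    proof -
      have ge: "0 \<le> inner (M a) a" using posM by (simp add: posop_def)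
      have "inner (M a) a \<noteq> 0"
      proof
        assume "inner (M a) a = 0"
        then have "M a = 0" by (rule pos_zero[OF bounded_linear.linear[OF blM] saM posM])
        then show False using injM \<open>a \<noteq> 0\<close> by blast
      qed
      then show ?thesis using ge by simp
    qed
    ultimately show "0 < inner (closure_op V D (- J v)) v" by simp
  qed
qed

end

theorem proposition4p7:
  fixes V :: "'a::{real_inner, complete_space} set"
    and D :: "'a \<Rightarrow> 'a"
    and \<gamma> :: "real \<Rightarrow> 'a \<Rightarrow> 'a"
  assumes V_subspace: "subspace V"
    and V_dense: "closure V = UNIV"
    and D_maps: "\<forall>v\<in>V. D v \<in> V"
    and D_add: "\<forall>v\<in>V. \<forall>w\<in>V. D (v + w) = D v + D w"
    and D_scale: "\<forall>v\<in>V. \<forall>c::real. D (c *\<^sub>R v) = c *\<^sub>R D v"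
    and D_skew: "\<forall>v\<in>V. \<forall>w\<in>V. inner (D v) w = - inner v (D w)"
    and \<gamma>_maps: "\<forall>t. \<forall>v\<in>V. \<gamma> t v \<in> V"
    and \<gamma>_add: "\<forall>t. \<forall>v\<in>V. \<forall>w\<in>V. \<gamma> t (v + w) = \<gamma> t v + \<gamma> t w"
    and \<gamma>_scale: "\<forall>t. \<forall>v\<in>V. \<forall>c::real. \<gamma> t (c *\<^sub>R v) = c *\<^sub>R \<gamma> t v"
    and \<gamma>_orth: "\<forall>t. \<forall>v\<in>V. \<forall>w\<in>V. inner (\<gamma> t v) (\<gamma> t w) = inner v w"
    and \<gamma>_zero: "\<forall>v\<in>V. \<gamma> 0 v = v"
    and \<gamma>_group: "\<forall>s t. \<forall>v\<in>V. \<gamma> (s + t) v = \<gamma> s (\<gamma> t v)"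
    and \<gamma>_cont: "\<forall>v\<in>V. continuous_on UNIV (\<lambda>t. \<gamma> t v)"
    and \<gamma>_gen: "\<forall>v\<in>V. ((\<lambda>t. \<gamma> t v) has_vector_derivative D v) (at 0)"
    and DV_dense: "closure (D ` V) = UNIV"
  shows "\<exists>I :: 'a \<Rightarrow> 'a.
     (\<forall>v\<in>smooth_dom V D. I v \<in> smooth_dom V D)
   \<and> (\<forall>v\<in>smooth_dom V D. \<forall>w\<in>smooth_dom V D. I (v + w) = I v + I w)
   \<and> (\<forall>v\<in>smooth_dom V D. \<forall>c::real. I (c *\<^sub>R v) = c *\<^sub>R I v)
   \<and> (\<forall>v\<in>smooth_dom V D. I (I v) = - v)
   \<and> (\<forall>v\<in>smooth_dom V D. \<forall>w\<in>smooth_dom V D. inner (I v) (I w) = inner v w)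
   \<and> (\<forall>t. \<forall>v\<in>smooth_dom V D.
        closure_op V (\<gamma> t) (I v) = I (closure_op V (\<gamma> t) v))
   \<and> (\<forall>v\<in>smooth_dom V D. \<forall>w\<in>smooth_dom V D.
        inner (closure_op V D (- I v)) w = inner (closure_op V D (- I w)) v)
   \<and> (\<forall>v\<in>smooth_dom V D. v \<noteq> 0 \<longrightarrow> inner (closure_op V D (- I v)) v > 0)"
proof -
  interpret setting V D \<gamma>
    by (unfold_locales; fact assms)
  show ?thesis by (rule main)
qed

end
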